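(* Let $\mathcal{H}_A,\mathcal{H}_B$ be complex Hilbert spaces of equal finite dimension $N$, let $\mathcal{H}_{AB}=\mathcal{H}_A\otimes\mathcal{H}_B$, let $0\le s\le\log N$, and let $\mathcal{E}=\mathcal{E}_A\otimes\mathcal{E}_B$ be a product of quantum channels (CPTP maps) $\mathcal{E}_A$ on $\mathcal{H}_A$ and $\mathcal{E}_B$ on $\mathcal{H}_B$. Then the optimal (smallest) privacy parameter $\varepsilon^*(s)$ for which $\mathcal{E}$ is ECLM-$\varepsilon$-QLDP on $\mathbb{H}_s$ is $$\varepsilon^*(s)=\log \max_{\ket{\phi_a}\in\mathcal{H}_A}\ \max_{\ket{\phi_b}\in\mathcal{H}_B}\ \frac{J_{\max}(\mathcal{K}_\phi,s)}{J_{\min}(\mathcal{K}_\phi,s)},$$ where the maxima range over unit vectors, $\mathcal{K}_\phi=\mathcal{E}_A^\dagger(\ket{\phi_a}\bra{\phi_a})\otimes\mathcal{E}_B^\dagger(\ket{\phi_b}\bra{\phi_b})$, and the ratio is interpreted as $+\infty$ (so $\varepsilon^*(s)=+\infty$, i.e. no finite $\varepsilon$ works) when the denominator vanishes and the numerator is positive.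
   Context: Entanglement entropy: for a unit vector $\ket{\psi}\in\mathcal{H}_{AB}$ with Schmidt decomposition $\ket{\psi}=\sum_j\sqrt{\lambda_j}\ket{j_A}\otimes\ket{j_B}$, $\mathbf{E}(\psi)=-\sum_j\lambda_j\log\lambda_j$ (the von Neumann entropy of the reduced state $\operatorname{Tr}_B\ket{\psi}\bra{\psi}$). The entanglement-constrained domain is $\mathbb{H}_s=\{\rho=\ket{\psi}\bra{\psi}:\ \ket{\psi}\in\mathcal{H}_{AB}\text{ unit},\ \mathbf{E}(\psi)\ge s\}$; pure states are identified with their rank-one density operators. $\mathcal{E}^\dagger$ denotes the Hilbert–Schmidt adjoint of a channel, so $\operatorname{Tr}(M\,\mathcal{E}(\rho))=\operatorname{Tr}(\mathcal{E}^\dagger(M)\rho)$. A local measurement (LM) adversary is a product POVM $\{\mathcal{M}_a\otimes\mathcal{M}_b\}_{(a,b)\in O_A\times O_B}$, where $\{\mathcal{M}_a\}_{a\in O_A}$ and $\{\mathcal{M}_b\}_{b\in O_B}$ are finite POVMs on $\mathcal{H}_A$ and $\mathcal{H}_B$; the outcome distribution on input $\rho$ is $\Pr[(a,b)]=\operatorname{Tr}((\mathcal{M}_a\otimes\mathcal{M}_b)\mathcal{E}(\rho))$. The mechanism $\mathcal{E}$ is ECLM-$\varepsilon$-QLDP on $\mathbb{H}_s$ if for every LM adversary $\mathcal{M}$, every $\rho,\rho'\in\mathbb{H}_s$ and every $T\subseteq O_A\times O_B$: $\Pr[\mathcal{M}(\mathcal{E}(\rho))\in T]\le e^{\varepsilon}\Pr[\mathcal{M}(\mathcal{E}(\rho'))\in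 T]$. For a positive semidefinite operator $\mathcal{K}$ on $\mathcal{H}_{AB}$: $J_{\max}(\mathcal{K},s)=\max_{\ket{\psi}\bra{\psi}\in\mathbb{H}_s}\bra{\psi}\mathcal{K}\ket{\psi}$ and $J_{\min}(\mathcal{K},s)=\min_{\ket{\psi}\bra{\psi}\in\mathbb{H}_s}\bra{\psi}\mathcal{K}\ket{\psi}$. *)

theory Defs
  imports "Jordan_Normal_Form.Jordan_Normal_Form" "HOL-Library.Extended_Real"
    "HOL-Computational_Algebra.Fundamental_Theorem_Algebra"
begin

text \<open>Finite-dimensional complex Hilbert spaces are modelled as coordinate spaces
  C^N (complex vec of dimension N); operators are complex N x N matrices.
  H_A = H_B = C^N, and H_AB = C^(N*N) with the basis ordering |a> (x) |b> = e_(a*N+b).\<close>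

definition mtrace :: "complex mat \<Rightarrow> complex" where
  "mtrace A = (\<Sum>i<dim_row A. A $$ (i, i))"

definition kron :: "complex mat \<Rightarrow> complex mat \<Rightarrow> complex mat" where
  "kron A B = mat (dim_row A * dim_row B) (dim_col A * dim_col B)
     (\<lambda>(i, j). A $$ (i div dim_row B, j div dim_col B) * B $$ (i mod dim_row B, j mod dim_col B))"

definition ketbra :: "complex vec \<Rightarrow> complex mat" where
  "ketbra v = mat (dim_vec v) (dim_vec v) (\<lambda>(i, j). v $ i * cnj (v $ j))"

definition is_unit_vector :: "nat \<Rightarrow> complex vec \<Rightarrow> bool" where
  "is_unit_vector n v \<longleftrightarrow> v \<in> carrier_vec n \<and> (\<Sum>i<n. (cmod (v $ i))\<^sup>2) = 1"

definition emat :: "nat \<Rightarrow> nat \<Rightarrow> nat \<Rightarrow> complex mat" where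
  "emat N i j = mat N N (\<lambda>(r, c). if r = i \<and> c = j then 1 else 0)"

definition psd :: "nat \<Rightarrow> complex mat \<Rightarrow> bool" where
  "psd n A \<longleftrightarrow> A \<in> carrier_mat n n \<and>
     (\<forall>v \<in> carrier_vec n. let q = (\<Sum>i<n. \<Sum>j<n. cnj (v $ i) * A $$ (i, j) * v $ j)
                              in Im q = 0 \<and> Re q \<ge> 0)"

text \<open>Ampliation E (x) id_k, acting on operators on C^N (x) C^k (index a*k+r).\<close>
definition ampliate :: "nat \<Rightarrow> (complex mat \<Rightarrow> complex mat) \<Rightarrow> nat \<Rightarrow> complex mat \<Rightarrow> complex mat" where
  "ampliate N E k X = mat (N * k) (N * k)
     (\<lambda>(r, c). E (mat N N (\<lambda>(a, b). X $$ (a * k + r mod k, b * k + c mod k))) $$ (r div k, c div k))"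

definition cptp :: "nat \<Rightarrow> (complex mat \<Rightarrow> complex mat) \<Rightarrow> bool" where
  "cptp N E \<longleftrightarrow>
     (\<forall>X \<in> carrier_mat N N. E X \<in> carrier_mat N N) \<and>
     (\<forall>X \<in> carrier_mat N N. \<forall>Y \<in> carrier_mat N N. E (X + Y) = E X + E Y) \<and>
     (\<forall>c. \<forall>X \<in> carrier_mat N N. E (c \<cdot>\<^sub>m X) = c \<cdot>\<^sub>m E X) \<and>
     (\<forall>X \<in> carrier_mat N N. mtrace (E X) = mtrace X) \<and>
     (\<forall>k. \<forall>X \<in> carrier_mat (N * k) (N * k). psd (N * k) X \<longrightarrow> psd (N * k) (ampliate N E k X))"

text \<open>Hilbert-Schmidt adjoint: the unique map with Tr(M E(rho)) = Tr(E^dagger(M) rho);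
  entrywise E^dagger(M)_(i,j) = Tr(M E(|j><i|)).\<close>
definition hs_adjoint :: "nat \<Rightarrow> (complex mat \<Rightarrow> complex mat) \<Rightarrow> complex mat \<Rightarrow> complex mat" where
  "hs_adjoint N E M = mat N N (\<lambda>(i, j). mtrace (M * E (emat N j i)))"

text \<open>Product channel E_A (x) E_B on operators of C^N (x) C^N, the linear extension of
  X (x) Y \<mapsto> E_A X (x) E_B Y.\<close>
definition prod_channel :: "nat \<Rightarrow> (complex mat \<Rightarrow> complex mat) \<Rightarrow> (complex mat \<Rightarrow> complex mat)
    \<Rightarrow> complex mat \<Rightarrow> complex mat" where
  "prod_channel N EA EB Z = mat (N * N) (N * N) (\<lambda>(r, c).
     \<Sum>i<N. \<Sum>j<N. \<Sum>k<N. \<Sum>l<N. Z $$ (i * N + k, j * N + l) *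
        EA (emat N i j) $$ (r div N, c div N) * EB (emat N k l) $$ (r mod N, c mod N))"

definition ptrace_B :: "nat \<Rightarrow> complex mat \<Rightarrow> complex mat" where
  "ptrace_B N R = mat N N (\<lambda>(a, a'). \<Sum>b<N. R $$ (a * N + b, a' * N + b))"

text \<open>von Neumann entropy (natural logarithm, 0 log 0 = 0), computed from the
  eigenvalues (with multiplicity) of the matrix.\<close>
definition vn_entropy :: "complex mat \<Rightarrow> real" where
  "vn_entropy R = - (\<Sum>x\<in>#proots (char_poly R). (if Re x \<le> 0 then 0 else Re x * ln (Re x)))"

definition ent_entropy :: "nat \<Rightarrow> complex vec \<Rightarrow> real" where
  "ent_entropy N \<psi> = vn_entropy (ptrace_B N (ketbra \<psi>))"

definition Hs :: "nat \<Rightarrow> real \<Rightarrow> complex mat set" where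
  "Hs N s = {ketbra \<psi> | \<psi>. is_unit_vector (N * N) \<psi> \<and> ent_entropy N \<psi> \<ge> s}"

definition Jmax :: "nat \<Rightarrow> complex mat \<Rightarrow> real \<Rightarrow> real" where
  "Jmax N K s = Sup ((\<lambda>\<rho>. Re (mtrace (K * \<rho>))) ` Hs N s)"

definition Jmin :: "nat \<Rightarrow> complex mat \<Rightarrow> real \<Rightarrow> real" where
  "Jmin N K s = Inf ((\<lambda>\<rho>. Re (mtrace (K * \<rho>))) ` Hs N s)"

definition povm :: "nat \<Rightarrow> nat \<Rightarrow> (nat \<Rightarrow> complex mat) \<Rightarrow> bool" where
  "povm N m M \<longleftrightarrow> (\<forall>i<m. psd N (M i)) \<and>
     (\<forall>r<N. \<forall>c<N. (\<Sum>i<m. M i $$ (r, c)) = (if r = c then 1 else 0))"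

definition lm_prob :: "nat \<Rightarrow> (complex mat \<Rightarrow> complex mat) \<Rightarrow> (complex mat \<Rightarrow> complex mat)
   \<Rightarrow> (nat \<Rightarrow> complex mat) \<Rightarrow> (nat \<Rightarrow> complex mat) \<Rightarrow> complex mat \<Rightarrow> (nat \<times> nat) set \<Rightarrow> real" where
  "lm_prob N EA EB MA MB \<rho> T =
     (\<Sum>(a, b)\<in>T. Re (mtrace (kron (MA a) (MB b) * prod_channel N EA EB \<rho>)))"

definition eclm_qldp :: "nat \<Rightarrow> (complex mat \<Rightarrow> complex mat) \<Rightarrow> (complex mat \<Rightarrow> complex mat)
   \<Rightarrow> real \<Rightarrow> real \<Rightarrow> bool" where
  "eclm_qldp N EA EB s \<epsilon> \<longleftrightarrow>
     (\<forall>ma mb MA MB. povm N ma MA \<longrightarrow> povm N mb MB \<longrightarrow>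
        (\<forall>\<rho> \<in> Hs N s. \<forall>\<rho>' \<in> Hs N s. \<forall>T. T \<subseteq> {..<ma} \<times> {..<mb} \<longrightarrow>
           lm_prob N EA EB MA MB \<rho> T \<le> exp \<epsilon> * lm_prob N EA EB MA MB \<rho>' T))"

text \<open>Optimal privacy parameter (infimum over admissible eps; +infinity if none).\<close>
definition eps_star :: "nat \<Rightarrow> (complex mat \<Rightarrow> complex mat) \<Rightarrow> (complex mat \<Rightarrow> complex mat)
   \<Rightarrow> real \<Rightarrow> ereal" where
  "eps_star N EA EB s = Inf {ereal \<epsilon> | \<epsilon>. eclm_qldp N EA EB s \<epsilon>}"

definition K_phi :: "nat \<Rightarrow> (complex mat \<Rightarrow> complex mat) \<Rightarrow> (complex mat \<Rightarrow> complex mat)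
   \<Rightarrow> complex vec \<Rightarrow> complex vec \<Rightarrow> complex mat" where
  "K_phi N EA EB \<phi>a \<phi>b = kron (hs_adjoint N EA (ketbra \<phi>a)) (hs_adjoint N EB (ketbra \<phi>b))"

text \<open>Ratio J_max/J_min with the convention x/0 = +infinity for x > 0;
  the degenerate case 0/0 (outcome of probability zero) is given value 1.\<close>
definition J_ratio :: "nat \<Rightarrow> complex mat \<Rightarrow> real \<Rightarrow> ereal" where
  "J_ratio N K s = (if Jmin N K s > 0 then ereal (Jmax N K s / Jmin N K s)
                    else if Jmax N K s > 0 then \<infinity> else 1)"

definition ereal_ln :: "ereal \<Rightarrow> ereal" where
  "ereal_ln x = (if x = \<infinity> then \<infinity> else if x \<le> 0 then -\<infinity> else ereal (ln (real_of_ereal x)))"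

end

theory Submission
  imports Defs
begin

definition qf :: "nat \<Rightarrow> complex mat \<Rightarrow> complex vec \<Rightarrow> complex" where
  "qf n A v = (\<Sum>i<n. \<Sum>j<n. cnj (v $ i) * A $$ (i, j) * v $ j)"

lemma psd_iff: "psd n A \<longleftrightarrow> A \<in> carrier_mat n n \<and>
   (\<forall>v\<in>carrier_vec n. Im (qf n A v) = 0 \<and> Re (qf n A v) \<ge> 0)"
  unfolding psd_def qf_def Let_def by simp

lemma pair_bound: "p < M \<Longrightarrow> q < N \<Longrightarrow> p*N+q < M*(N::nat)"
proof -
  assume "p < M" "q < N"
  then have "p*N+q < (p+1)*N" by simp
  also have "\<dots> \<le> M*N" using \<open>p < M\<close> by (intro mult_le_mono1) simp
  finally show ?thesis .
qed

lemma sum_pair_split: "(\<Sum>r<M*(N::nat). g r) = (\<Sum>p<M. \<Sum>q<N. g (p*N+q))"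
proof -
  have "(\<Sum>p<M. \<Sum>q<N. g (p*N+q)) = (\<Sum>(p,q)\<in>{..<M}\<times>{..<N}. g (p*N+q))"
    by (simp add: sum.cartesian_product)
  also have "\<dots> = (\<Sum>r<M*N. g r)"
  proof (rule sum.reindex_bij_witness[where i="\<lambda>r. (r div N, r mod N)" and j="\<lambda>(p,q). p*N+q"])
    fix a assume a: "a \<in> {..<M}\<times>{..<N}"
    then show "(\<lambda>r. (r div N, r mod N)) ((\<lambda>(p,q). p*N+q) a) = a" by (auto split: prod.splits)
    from a show "(\<lambda>(p,q). p*N+q) a \<in> {..<M*N}"
      by (auto split: prod.splits intro: pair_bound)
  next
    fix b assume b: "b \<in> {..<M*N}"
    then show "(\<lambda>(p,q). p*N+q) (b div N, b mod N) = b" by simp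
    from b show "(b div N, b mod N) \<in> {..<M}\<times>{..<N}"
    proof -
      have "N > 0" using b by (cases N) auto
      then show ?thesis using b by (auto simp: less_mult_imp_div_less)
    qed
  qed (auto split: prod.splits)
  finally show ?thesis ..
qed

lemma qf_sum:
  assumes "\<And>r c. r<n \<Longrightarrow> c<n \<Longrightarrow> K $$ (r,c) = (\<Sum>k\<in>S. F k $$ (r,c))"
  shows "qf n K v = (\<Sum>k\<in>S. qf n (F k) v)"
proof -
  have "qf n K v = (\<Sum>i<n. \<Sum>j<n. \<Sum>k\<in>S. cnj (v $ i) * F k $$ (i, j) * v $ j)"
    unfolding qf_def by (simp add: assms sum_distrib_left sum_distrib_right)
  also have "\<dots> = (\<Sum>i<n. \<Sum>k\<in>S. \<Sum>j<n. cnj (v $ i) * F k $$ (i, j) * v $ j)"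
    by (rule sum.cong[OF refl], rule sum.swap)
  also have "\<dots> = (\<Sum>k\<in>S. \<Sum>i<n. \<Sum>j<n. cnj (v $ i) * F k $$ (i, j) * v $ j)"
    by (rule sum.swap)
  finally show ?thesis unfolding qf_def .
qed

lemma qf_scale:
  assumes "\<And>r c. r<n \<Longrightarrow> c<n \<Longrightarrow> K $$ (r,c) = a * K' $$ (r,c)"
  shows "qf n K v = a * qf n K' v"
  unfolding qf_def by (simp add: assms sum_distrib_left mult.assoc mult.left_commute)

lemma mtrace_mult:
  assumes "A \<in> carrier_mat n n" "B \<in> carrier_mat n n"
  shows "mtrace (A * B) = (\<Sum>i<n. \<Sum>j<n. A $$ (i,j) * B $$ (j,i))"
  using assms unfolding mtrace_def
  by (auto simp: scalar_prod_def atLeast0LessThan intro!: sum.cong)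

lemma mtrace_ketbra:
  assumes "K \<in> carrier_mat n n" "\<psi> \<in> carrier_vec n"
  shows "mtrace (K * ketbra \<psi>) = qf n K \<psi>"
proof -
  have kb: "ketbra \<psi> \<in> carrier_mat n n" using assms(2) unfolding ketbra_def by auto
  show ?thesis unfolding mtrace_mult[OF assms(1) kb] qf_def
    using assms(2) by (auto simp: ketbra_def intro!: sum.cong)
qed

lemma split4: fixes N :: nat shows
  "(\<Sum>r<N*N. \<Sum>c<N*N. F (r div N) (r mod N) (c div N) (c mod N)) =
   (\<Sum>x<N. \<Sum>x'<N. \<Sum>y<N. \<Sum>y'<N. F x x' y y')"
proof -
  have A: "\<And>G. (\<Sum>r<N*N. G r) = (\<Sum>x<N. \<Sum>x'<N. G (x*N+x'))" by (rule sum_pair_split)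
  show ?thesis by (simp only: A) (auto intro!: sum.cong)
qed

lemma emat_carrier[simp]: "emat N i j \<in> carrier_mat N N"
  unfolding emat_def by simp

lemma cptp_carrier: "cptp N E \<Longrightarrow> X \<in> carrier_mat N N \<Longrightarrow> E X \<in> carrier_mat N N"
  unfolding cptp_def by blast

lemma hs_adj_carrier[simp]: "hs_adjoint N E M \<in> carrier_mat N N"
  unfolding hs_adjoint_def by simp

lemma hs_adj_entry:
  assumes "cptp N E" "p<N" "q<N" "M \<in> carrier_mat N N"
  shows "hs_adjoint N E M $$ (p,q) = (\<Sum>x<N. \<Sum>y<N. M $$ (x,y) * E (emat N q p) $$ (y,x))"
proof -
  have "E (emat N q p) \<in> carrier_mat N N" using cptp_carrier[OF assms(1)] by simp
  then show ?thesis unfolding hs_adjoint_def using assms(2,3)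
    by (simp add: mtrace_mult[OF assms(4)])
qed

lemma kron_carrier[simp]: "A \<in> carrier_mat N N \<Longrightarrow> B \<in> carrier_mat N N \<Longrightarrow> kron A B \<in> carrier_mat (N*N) (N*N)"
  unfolding kron_def by simp

lemma kron_entry:
  assumes "A \<in> carrier_mat N N" "B \<in> carrier_mat N N" "r < N*N" "c < N*N"
  shows "kron A B $$ (r,c) = A $$ (r div N, c div N) * B $$ (r mod N, c mod N)"
  using assms unfolding kron_def by simp

lemma pc_carrier[simp]: "prod_channel N EA EB Z \<in> carrier_mat (N*N) (N*N)"
  unfolding prod_channel_def by simp

lemma swap_out:
  "(\<Sum>r\<in>A. \<Sum>c\<in>B. \<Sum>i\<in>C. f r c i) = (\<Sum>i\<in>C. \<Sum>r\<in>A. \<Sum>c\<in>B. f r c i)"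
proof -
  have "(\<Sum>r\<in>A. \<Sum>c\<in>B. \<Sum>i\<in>C. f r c i) = (\<Sum>r\<in>A. \<Sum>i\<in>C. \<Sum>c\<in>B. f r c i)"
    by (rule sum.cong[OF refl], rule sum.swap)
  also have "\<dots> = (\<Sum>i\<in>C. \<Sum>r\<in>A. \<Sum>c\<in>B. f r c i)" by (rule sum.swap)
  finally show ?thesis .
qed

lemma trace_identity:
  assumes EA: "cptp N EA" and EB: "cptp N EB"
    and MA: "MA \<in> carrier_mat N N" and MB: "MB \<in> carrier_mat N N"
    and Z: "Z \<in> carrier_mat (N*N) (N*N)"
  shows "mtrace (kron MA MB * prod_channel N EA EB Z) =
         mtrace (kron (hs_adjoint N EA MA) (hs_adjoint N EB MB) * Z)"
proof -
  define hA where "hA i j = (\<Sum>x<N. \<Sum>y<N. MA $$ (x,y) * EA (emat N i j) $$ (y,x))" for i j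
  define hB where "hB i j = (\<Sum>x<N. \<Sum>y<N. MB $$ (x,y) * EB (emat N i j) $$ (y,x))" for i j
  define T where "T i j k l r c = kron MA MB $$ (r,c) * (Z $$ (i * N + k, j * N + l) *
        EA (emat N i j) $$ (c div N, r div N) * EB (emat N k l) $$ (c mod N, r mod N))" for i j k l r c
  have "mtrace (kron MA MB * prod_channel N EA EB Z) =
     (\<Sum>r<N*N. \<Sum>c<N*N. \<Sum>i<N. \<Sum>j<N. \<Sum>k<N. \<Sum>l<N. T i j k l r c)"
    unfolding mtrace_mult[OF kron_carrier[OF MA MB] pc_carrier] T_def
    by (auto simp: prod_channel_def sum_distrib_left intro!: sum.cong)
  also have "\<dots> = (\<Sum>i<N. \<Sum>j<N. \<Sum>k<N. \<Sum>l<N. \<Sum>r<N*N. \<Sum>c<N*N. T i j k l r c)"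
    apply (subst swap_out, rule sum.cong[OF refl])
    apply (subst swap_out, rule sum.cong[OF refl])
    apply (subst swap_out, rule sum.cong[OF refl])
    apply (subst swap_out, rule refl)
    done
  also have "\<dots> = (\<Sum>i<N. \<Sum>j<N. \<Sum>k<N. \<Sum>l<N. Z $$ (i * N + k, j * N + l) * hA i j * hB k l)"
  proof (intro sum.cong refl)
    fix i j k l
    have "(\<Sum>r<N*N. \<Sum>c<N*N. T i j k l r c) =
      (\<Sum>r<N*N. \<Sum>c<N*N. (\<lambda>x x' y y'. MA $$ (x,y) * MB $$ (x',y') * (Z $$ (i * N + k, j * N + l) *
        EA (emat N i j) $$ (y, x) * EB (emat N k l) $$ (y', x'))) (r div N) (r mod N) (c div N) (c mod N))"
      unfolding T_def by (intro sum.cong refl) (simp add: kron_entry[OF MA MB])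
    also have "\<dots> = (\<Sum>x<N. \<Sum>x'<N. \<Sum>y<N. \<Sum>y'<N. MA $$ (x,y) * MB $$ (x',y') * (Z $$ (i * N + k, j * N + l) *
        EA (emat N i j) $$ (y, x) * EB (emat N k l) $$ (y', x')))"
      by (rule split4)
    also have "\<dots> = (\<Sum>x<N. \<Sum>y<N. \<Sum>x'<N. \<Sum>y'<N. MA $$ (x,y) * MB $$ (x',y') * (Z $$ (i * N + k, j * N + l) *
        EA (emat N i j) $$ (y, x) * EB (emat N k l) $$ (y', x')))"
      by (rule sum.cong[OF refl], rule sum.swap)
    also have "\<dots> = Z $$ (i * N + k, j * N + l) * hA i j * hB k l"
      unfolding hA_def hB_def by (simp add: sum_distrib_left sum_distrib_right mult_ac)
    finally show "(\<Sum>r<N*N. \<Sum>c<N*N. T i j k l r c) = Z $$ (i * N + k, j * N + l) * hA i j * hB k l" .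
  qed
  also have "\<dots> = (\<Sum>i<N. \<Sum>k<N. \<Sum>j<N. \<Sum>l<N. Z $$ (i * N + k, j * N + l) * hA i j * hB k l)"
    by (rule sum.cong[OF refl], rule sum.swap)
  also have "\<dots> = (\<Sum>c<N*N. \<Sum>r<N*N. (\<lambda>i k j l. Z $$ (i * N + k, j * N + l) * hA i j * hB k l)
        (c div N) (c mod N) (r div N) (r mod N))"
    by (rule split4[symmetric])
  also have "\<dots> = (\<Sum>c<N*N. \<Sum>r<N*N. Z $$ (c, r) * (hA (c div N) (r div N) * hB (c mod N) (r mod N)))"
    by (simp add: mult.assoc)
  also have "\<dots> = (\<Sum>r<N*N. \<Sum>c<N*N. Z $$ (c, r) * (hA (c div N) (r div N) * hB (c mod N) (r mod N)))"
    by (rule sum.swap)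
  also have "\<dots> = mtrace (kron (hs_adjoint N EA MA) (hs_adjoint N EB MB) * Z)"
    unfolding mtrace_mult[OF kron_carrier[OF hs_adj_carrier hs_adj_carrier] Z]
  proof (intro sum.cong refl)
    fix r c assume r: "r \<in> {..<N*N}" and c: "c \<in> {..<N*N}"
    have N: "N > 0" using r by (cases N) auto
    have "r div N < N" "c div N < N" using r c by (auto simp: less_mult_imp_div_less)
    moreover have "r mod N < N" "c mod N < N" using N by auto
    ultimately show "Z $$ (c, r) * (hA (c div N) (r div N) * hB (c mod N) (r mod N)) =
      kron (hs_adjoint N EA MA) (hs_adjoint N EB MB) $$ (r, c) * Z $$ (c, r)"
      using r c by (simp add: kron_entry[OF hs_adj_carrier hs_adj_carrier] hs_adj_entry[OF EA _ _ MA] hs_adj_entry[OF EB _ _ MB] hA_def hB_def)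
  qed
  finally show ?thesis .
qed

definition bf :: "nat \<Rightarrow> complex mat \<Rightarrow> (nat \<Rightarrow> complex) \<Rightarrow> (nat \<Rightarrow> complex) \<Rightarrow> complex" where
  "bf n A a b = (\<Sum>i<n. \<Sum>j<n. cnj (a i) * A $$ (i, j) * b j)"

lemma qf_vec: "qf n A (vec n a) = bf n A a a"
  unfolding qf_def bf_def by (intro sum.cong refl) simp

lemma bf_add: "bf n A (\<lambda>i. a i + b i) (\<lambda>i. a i + b i) = bf n A a a + bf n A b b + bf n A a b + bf n A b a"
  unfolding bf_def by (simp add: ring_distribs sum.distrib)

lemma sum_delta_right: "k < (n::nat) \<Longrightarrow> (\<Sum>j<n. c j * (if j = k then t else 0)) = c k * (t::complex)"
proof -
  assume k: "k < n"
  have eq: "(\<lambda>j. c j * (if j = k then t else 0)) = (\<lambda>j. if j = k then c j * t else 0)" by auto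
  show ?thesis unfolding eq using k by (simp add: sum.delta)
qed

lemma sum_delta_left: "k < (n::nat) \<Longrightarrow> (\<Sum>j<n. (if j = k then t else 0) * c j) = (t::complex) * c k"
proof -
  assume k: "k < n"
  have eq: "(\<lambda>j. (if j = k then t else 0) * c j) = (\<lambda>j. if j = k then t * c j else 0)" by auto
  show ?thesis unfolding eq using k by (simp add: sum.delta)
qed

lemma bf_delta_right: "k < n \<Longrightarrow> bf n A a (\<lambda>j. if j = k then t else 0) = t * (\<Sum>i<n. cnj (a i) * A $$ (i,k))"
  unfolding bf_def by (simp only: sum_delta_right) (simp add: sum_distrib_left mult_ac)

lemma bf_delta_left: "k < n \<Longrightarrow> bf n A (\<lambda>j. if j = k then t else 0) a = cnj t * (\<Sum>j<n. A $$ (k,j) * a j)"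
proof -
  assume k: "k < n"
  have "bf n A (\<lambda>j. if j = k then t else 0) a = (\<Sum>j<n. \<Sum>i<n. (if i = k then cnj t else 0) * (A $$ (i, j) * a j))"
    unfolding bf_def by (subst sum.swap) (auto intro!: sum.cong simp: mult_ac)
  also have "\<dots> = cnj t * (\<Sum>j<n. A $$ (k,j) * a j)"
    using k by (simp add: sum_delta_left sum_distrib_left)
  finally show ?thesis .
qed

lemma bf_delta_delta: "k < n \<Longrightarrow> l < n \<Longrightarrow>
   bf n A (\<lambda>j. if j = k then t else 0) (\<lambda>j. if j = l then u else 0) = cnj t * A $$ (k,l) * u"
  by (simp add: bf_delta_left sum_delta_right)

lemma psd_qf: "psd n A \<Longrightarrow> v \<in> carrier_vec n \<Longrightarrow> Im (qf n A v) = 0 \<and> Re (qf n A v) \<ge> 0"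
  unfolding psd_iff by blast

lemma psd_bf: "psd n A \<Longrightarrow> Im (bf n A a a) = 0 \<and> Re (bf n A a a) \<ge> 0"
  using psd_qf[of n A "vec n a"] by (simp add: qf_vec)

lemma psd_diag: "psd n A \<Longrightarrow> k < n \<Longrightarrow> Im (A $$ (k,k)) = 0 \<and> Re (A $$ (k,k)) \<ge> 0"
  using psd_bf[of n A "\<lambda>j. if j = k then 1 else 0"] by (simp add: bf_delta_delta)

lemma psd_herm:
  assumes A: "psd n A" and i: "i < n" and j: "j < n"
  shows "A $$ (j,i) = cnj (A $$ (i,j))"
proof -
  let ?a = "\<lambda>x. if x = i then (1::complex) else 0"
  let ?b = "\<lambda>t x. if x = j then (t::complex) else 0"
  have e: "bf n A (\<lambda>x. ?a x + ?b t x) (\<lambda>x. ?a x + ?b t x) =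
     A $$ (i,i) + cnj t * A $$ (j,j) * t + t * A $$ (i,j) + cnj t * A $$ (j,i)" for t
    unfolding bf_add using i j by (simp add: bf_delta_delta)
  have "Im (bf n A (\<lambda>x. ?a x + ?b t x) (\<lambda>x. ?a x + ?b t x)) = 0" for t
    using psd_bf[OF A] by blast
  from this[of 1] this[of "\<i>"] have
    1: "Im (A $$ (i,i) + A $$ (j,j) + A $$ (i,j) + A $$ (j,i)) = 0" and
    2: "Im (A $$ (i,i) + A $$ (j,j) + \<i> * A $$ (i,j) - \<i> * A $$ (j,i)) = 0"
    unfolding e by (simp_all add: algebra_simps)
  have d: "Im (A $$ (i,i)) = 0" "Im (A $$ (j,j)) = 0" using psd_diag[OF A] i j by auto
  show ?thesis using 1 2 d by (intro complex_eqI) auto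
qed

lemma qf_bf: "qf n A v = bf n A (\<lambda>i. v $ i) (\<lambda>i. v $ i)"
  unfolding qf_def bf_def by simp

lemma psd_cs:
  assumes A: "psd n A" and k: "k < n"
  shows "(cmod (\<Sum>j<n. A $$ (k,j) * a j))^2 \<le> Re (A $$ (k,k)) * Re (bf n A a a)"
proof -
  define c where "c = (\<Sum>j<n. A $$ (k,j) * a j)"
  have d: "(\<Sum>i<n. cnj (a i) * A $$ (i,k)) = cnj c"
    unfolding c_def by (simp add: psd_herm[OF A k] mult.commute)
  have Ikk: "Im (A $$ (k,k)) = 0" and Rkk: "Re (A $$ (k,k)) \<ge> 0" using psd_diag[OF A k] by auto
  have e: "bf n A (\<lambda>x. a x + (if x = k then t else 0)) (\<lambda>x. a x + (if x = k then t else 0)) =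
     bf n A a a + cnj t * A $$ (k,k) * t + t * cnj c + cnj t * c" for t
    unfolding bf_add using k by (simp add: bf_delta_delta bf_delta_right bf_delta_left d c_def[symmetric])
  define m where "m = (cmod c)^2"
  define \<alpha> where "\<alpha> = Re (A $$ (k,k))"
  define q where "q = Re (bf n A a a)"
  have q0: "q \<ge> 0" unfolding q_def using psd_bf[OF A] by blast
  have key: "q + s^2 * m * \<alpha> - 2 * s * m \<ge> 0" for s :: real
  proof -
    let ?t = "- (complex_of_real s * c)"
    have "Re (bf n A (\<lambda>x. a x + (if x = k then ?t else 0)) (\<lambda>x. a x + (if x = k then ?t else 0))) \<ge> 0"
      using psd_bf[OF A] by blast
    also have "Re (bf n A (\<lambda>x. a x + (if x = k then ?t else 0)) (\<lambda>x. a x + (if x = k then ?t else 0)))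
       = q + s^2 * m * \<alpha> - 2 * s * m"
    proof -
      have cc: "c * cnj c = complex_of_real m" unfolding m_def by (rule complex_norm_square[symmetric])
      have "cnj ?t * A $$ (k,k) * ?t = complex_of_real (s^2) * (c * cnj c) * A $$ (k,k)"
        by (simp add: power2_eq_square mult_ac)
      also have "\<dots> = complex_of_real (s^2 * m) * A $$ (k,k)" by (simp add: cc)
      finally have h: "cnj ?t * A $$ (k,k) * ?t = complex_of_real (s^2 * m) * A $$ (k,k)" .
      have 1: "Re (cnj ?t * A $$ (k,k) * ?t) = s^2 * m * \<alpha>" unfolding h \<alpha>_def by simp
      have 2: "?t * cnj c = - complex_of_real (s * m)" by (simp add: cc[symmetric] mult_ac)
      have 3: "cnj ?t * c = - complex_of_real (s * m)" by (simp add: cc[symmetric] mult_ac)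
      have R: "Re (w + x + y + z) = Re w + Re x + Re y + Re z" for w x y z :: complex by simp
      show ?thesis unfolding e R 1 2 3 q_def by simp
    qed
    finally show ?thesis by simp
  qed
  have m0: "m \<ge> 0" unfolding m_def by simp
  have "m \<le> \<alpha> * q"
  proof (cases "\<alpha> > 0")
    case True
    have "q + (1/\<alpha>)^2 * m * \<alpha> - 2 * (1/\<alpha>) * m \<ge> 0" by (rule key)
    then have "q - m / \<alpha> \<ge> 0" using True by (simp add: power2_eq_square field_simps)
    then show ?thesis using True by (simp add: field_simps)
  next
    case False
    then have a0: "\<alpha> = 0" using Rkk unfolding \<alpha>_def by simp
    show ?thesis
    proof (rule ccontr)
      assume "\<not> m \<le> \<alpha> * q"
      then have mp: "m > 0" using a0 by simp
      have "q + ((q+1)/(2*m))^2 * m * \<alpha> - 2 * ((q+1)/(2*m)) * m \<ge> 0" by (rule key)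
      then show False using a0 mp by (simp add: field_simps)
    qed
  qed
  then show ?thesis unfolding m_def \<alpha>_def q_def c_def .
qed

lemma psd_decomp_aux:
  "n - k = d \<Longrightarrow> k \<le> n \<Longrightarrow> psd n A \<Longrightarrow> (\<forall>i<n. \<forall>j<n. (i < k \<or> j < k) \<longrightarrow> A $$ (i,j) = 0) \<Longrightarrow>
   \<exists>(m::nat) us. (\<forall>l<m. us l \<in> carrier_vec n) \<and>
      (\<forall>i<n. \<forall>j<n. A $$ (i,j) = (\<Sum>l<m. us l $ i * cnj (us l $ j)))"
proof (induction d arbitrary: k A)
  case 0
  then have "k = n" by simp
  then have "A $$ (i,j) = 0" if "i < n" "j < n" for i j using 0 that by auto
  then have H: "(\<forall>l<(0::nat). (\<lambda>_. 0\<^sub>v n) l \<in> carrier_vec n) \<and>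
      (\<forall>i<n. \<forall>j<n. A $$ (i,j) = (\<Sum>l<(0::nat). (\<lambda>_. 0\<^sub>v n) l $ i * cnj ((\<lambda>_. 0\<^sub>v n) l $ j)))"
    by simp
  show ?case by (rule exI, rule exI, rule H)
next
  case (Suc d)
  then have k: "k < n" and d: "n - Suc k = d" by auto
  have A: "psd n A" by fact
  have Z: "\<forall>i<n. \<forall>j<n. (i < k \<or> j < k) \<longrightarrow> A $$ (i,j) = 0" by fact
  have Ikk: "Im (A $$ (k,k)) = 0" and Rkk: "Re (A $$ (k,k)) \<ge> 0" using psd_diag[OF A k] by auto
  define \<alpha> where "\<alpha> = Re (A $$ (k,k))"
  have Akk: "A $$ (k,k) = complex_of_real \<alpha>" unfolding \<alpha>_def using Ikk by (simp add: complex_eq_iff)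
  show ?case
  proof (cases "\<alpha> = 0")
    case True
    have row: "A $$ (k,j) = 0" if j: "j < n" for j
    proof -
      have "(cmod (\<Sum>l<n. A $$ (k,l) * (if l = j then 1 else 0)))^2 \<le> \<alpha> * Re (bf n A (\<lambda>l. if l = j then 1 else 0) (\<lambda>l. if l = j then 1 else 0))"
        unfolding \<alpha>_def by (rule psd_cs[OF A k])
      then have "(cmod (A $$ (k,j)))^2 \<le> 0" using True j by (simp add: sum_delta_right)
      then show ?thesis by simp
    qed
    have col: "A $$ (j,k) = 0" if j: "j < n" for j
      using psd_herm[OF A k j] row[OF j] by simp
    have Z': "\<forall>i<n. \<forall>j<n. (i < Suc k \<or> j < Suc k) \<longrightarrow> A $$ (i,j) = 0"
    proof (intro allI impI)
      fix i j assume i: "i < n" and j: "j < n" and ij: "i < Suc k \<or> j < Suc k"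
      then consider "i < k \<or> j < k" | "i = k" | "j = k" by linarith
      then show "A $$ (i,j) = 0" using Z i j row col by cases auto
    qed
    show ?thesis using Suc.IH[OF d _ A Z'] k by simp
  next
    case False
    then have ap: "\<alpha> > 0" using Rkk unfolding \<alpha>_def by simp
    define \<sigma> where "\<sigma> = sqrt \<alpha>"
    have sp: "\<sigma> > 0" unfolding \<sigma>_def using ap by simp
    have ss: "\<sigma> * \<sigma> = \<alpha>" unfolding \<sigma>_def using ap by simp
    define u where "u = vec n (\<lambda>i. A $$ (i,k) / complex_of_real \<sigma>)"
    have u: "u \<in> carrier_vec n" unfolding u_def by simp
    have ui: "u $ i = A $$ (i,k) / complex_of_real \<sigma>" if "i < n" for i
      unfolding u_def using that by simp
    define A' where "A' = mat n n (\<lambda>(i,j). A $$ (i,j) - u $ i * cnj (u $ j))"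
    have A'e: "A' $$ (i,j) = A $$ (i,j) - u $ i * cnj (u $ j)" if "i < n" "j < n" for i j
      unfolding A'_def using that by simp
    have cnju: "cnj (u $ j) = A $$ (k,j) / complex_of_real \<sigma>" if "j < n" for j
      using ui[OF that] psd_herm[OF A that k] by simp
    have uk: "u $ k = complex_of_real \<sigma>"
    proof -
      have "\<alpha> / \<sigma> = \<sigma>" using ss sp by (simp add: field_simps)
      moreover have "u $ k = complex_of_real (\<alpha> / \<sigma>)" using ui[OF k] Akk by simp
      ultimately show ?thesis by simp
    qed
    have psdA': "psd n A'"
      unfolding psd_iff
    proof (intro conjI ballI)
      show "A' \<in> carrier_mat n n" unfolding A'_def by simp
      fix v :: "complex vec" assume v: "v \<in> carrier_vec n"
      define c where "c = (\<Sum>j<n. A $$ (k,j) * v $ j)"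
      have s1: "(\<Sum>i<n. cnj (v $ i) * u $ i) = cnj c / complex_of_real \<sigma>"
        unfolding c_def by (simp add: ui psd_herm[OF A k] sum_divide_distrib mult.commute)
      have s2: "(\<Sum>j<n. cnj (u $ j) * v $ j) = c / complex_of_real \<sigma>"
        unfolding c_def by (simp add: cnju sum_divide_distrib)
      have "qf n A' v = (\<Sum>i<n. \<Sum>j<n. cnj (v $ i) * A $$ (i,j) * v $ j - (cnj (v $ i) * u $ i) * (cnj (u $ j) * v $ j))"
        unfolding qf_def by (intro sum.cong refl) (simp add: A'e algebra_simps)
      also have "\<dots> = qf n A v - (\<Sum>i<n. \<Sum>j<n. (cnj (v $ i) * u $ i) * (cnj (u $ j) * v $ j))"
        unfolding qf_def by (simp add: sum_subtractf)
      also have "\<dots> = qf n A v - (\<Sum>i<n. cnj (v $ i) * u $ i) * (\<Sum>j<n. cnj (u $ j) * v $ j)"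
        by (simp add: sum_product)
      also have "\<dots> = qf n A v - complex_of_real ((cmod c)^2 / \<alpha>)"
      proof -
        have "cnj c / complex_of_real \<sigma> * (c / complex_of_real \<sigma>) = (c * cnj c) / complex_of_real (\<sigma> * \<sigma>)"
          by (simp only: times_divide_times_eq of_real_mult mult.commute)
        also have "\<dots> = complex_of_real ((cmod c)^2) / complex_of_real \<alpha>"
          unfolding ss complex_norm_square ..
        also have "\<dots> = complex_of_real ((cmod c)^2 / \<alpha>)" by simp
        finally show ?thesis unfolding s1 s2 by simp
      qed
      finally have eq: "qf n A' v = qf n A v - complex_of_real ((cmod c)^2 / \<alpha>)" .
      have cs: "(cmod c)^2 \<le> \<alpha> * Re (qf n A v)"
        unfolding c_def \<alpha>_def qf_bf by (rule psd_cs[OF A k])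
      have "Im (qf n A v) = 0" using psd_qf[OF A v] by blast
      then show "Im (qf n A' v) = 0" unfolding eq by simp
      show "Re (qf n A' v) \<ge> 0" unfolding eq using cs ap by (simp add: field_simps)
    qed
    have Z': "\<forall>i<n. \<forall>j<n. (i < Suc k \<or> j < Suc k) \<longrightarrow> A' $$ (i,j) = 0"
    proof (intro allI impI)
      fix i j assume i: "i < n" and j: "j < n" and ij: "i < Suc k \<or> j < Suc k"
      then consider "i < k" | "j < k" | "i = k" | "j = k" by linarith
      then show "A' $$ (i,j) = 0"
      proof cases
        case 1 then show ?thesis using Z i j k by (simp add: A'e ui)
      next
        case 2
        then have "A $$ (k,j) = 0" "A $$ (i,j) = 0" using Z i j k by auto
        then show ?thesis using i j by (simp add: A'e cnju)
      next
        case 3 then show ?thesis using i j k sp by (simp add: A'e uk cnju)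
      next
        case 4 then show ?thesis using i j k sp by (simp add: A'e ui uk)
      qed
    qed
    have "\<exists>(m::nat) us. (\<forall>l<m. us l \<in> carrier_vec n) \<and>
        (\<forall>i<n. \<forall>j<n. A' $$ (i,j) = (\<Sum>l<m. us l $ i * cnj (us l $ j)))"
      using Suc.IH[OF d _ psdA' Z'] k by simp
    then obtain m :: nat and us where us: "\<forall>l<m. us l \<in> carrier_vec n"
      and dec: "\<forall>i<n. \<forall>j<n. A' $$ (i,j) = (\<Sum>l<m. us l $ i * cnj (us l $ j))"
      by blast
    show ?thesis
    proof (intro exI[of _ "Suc m"] exI[of _ "us(m := u)"] conjI allI impI)
      fix l assume "l < Suc m" then show "(us(m := u)) l \<in> carrier_vec n" using us u by auto
    next
      fix i j assume i: "i < n" and j: "j < n"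
      have "A $$ (i,j) = A' $$ (i,j) + u $ i * cnj (u $ j)" using A'e[OF i j] by simp
      also have "\<dots> = (\<Sum>l<m. (us(m := u)) l $ i * cnj ((us(m := u)) l $ j)) + u $ i * cnj (u $ j)"
        using dec i j by simp
      also have "\<dots> = (\<Sum>l<Suc m. (us(m := u)) l $ i * cnj ((us(m := u)) l $ j))" by simp
      finally show "A $$ (i,j) = (\<Sum>l<Suc m. (us(m := u)) l $ i * cnj ((us(m := u)) l $ j))" .
    qed
  qed
qed

lemma psd_decomp:
  "psd n A \<Longrightarrow> \<exists>(m::nat) us. (\<forall>l<m. us l \<in> carrier_vec n) \<and>
      (\<forall>i<n. \<forall>j<n. A $$ (i,j) = (\<Sum>l<m. us l $ i * cnj (us l $ j)))"
  by (rule psd_decomp_aux[of n 0 n]) auto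

lemma ketbra_carrier[simp]: "v \<in> carrier_vec n \<Longrightarrow> ketbra v \<in> carrier_mat n n"
  unfolding ketbra_def by simp

lemma ketbra_dims[simp]: "dim_row (ketbra v) = dim_vec v" "dim_col (ketbra v) = dim_vec v"
  unfolding ketbra_def by simp_all

lemma ketbra_entry: "v \<in> carrier_vec n \<Longrightarrow> i < n \<Longrightarrow> j < n \<Longrightarrow> ketbra v $$ (i,j) = v $ i * cnj (v $ j)"
  unfolding ketbra_def by simp

lemma qf_ketbra:
  assumes v: "v \<in> carrier_vec n"
  shows "qf n (ketbra v) w = (\<Sum>i<n. cnj (w $ i) * v $ i) * cnj (\<Sum>i<n. cnj (w $ i) * v $ i)"
proof -
  have "qf n (ketbra v) w = (\<Sum>i<n. \<Sum>j<n. (cnj (w $ i) * v $ i) * (cnj (v $ j) * w $ j))"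
    unfolding qf_def using v by (intro sum.cong refl) (simp add: ketbra_entry mult_ac)
  also have "\<dots> = (\<Sum>i<n. cnj (w $ i) * v $ i) * (\<Sum>j<n. cnj (v $ j) * w $ j)"
    by (simp add: sum_product)
  also have "(\<Sum>j<n. cnj (v $ j) * w $ j) = cnj (\<Sum>i<n. cnj (w $ i) * v $ i)"
    by (simp add: mult.commute)
  finally show ?thesis .
qed

lemma qf_ketbra_nonneg:
  assumes v: "v \<in> carrier_vec n"
  shows "Im (qf n (ketbra v) w) = 0 \<and> Re (qf n (ketbra v) w) \<ge> 0"
proof -
  define z where "z = (\<Sum>i<n. cnj (w $ i) * v $ i)"
  have "z * cnj z = complex_of_real ((Re z)^2 + (Im z)^2)" by (rule complex_mult_cnj)
  then show ?thesis unfolding qf_ketbra[OF v] z_def[symmetric] by simp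
qed

lemma psd_ketbra: "v \<in> carrier_vec n \<Longrightarrow> psd n (ketbra v)"
  unfolding psd_iff using qf_ketbra_nonneg by auto

lemma cptp_pos:
  assumes E: "cptp N E" and X: "psd N X"
  shows "psd N (E X)"
proof -
  have Xc: "X \<in> carrier_mat N N" using X unfolding psd_iff by blast
  have EXc: "E X \<in> carrier_mat N N" using cptp_carrier[OF E Xc] .
  have H: "\<forall>k. \<forall>X\<in>carrier_mat (N*k) (N*k). psd (N*k) X \<longrightarrow> psd (N*k) (ampliate N E k X)"
    using E unfolding cptp_def by blast
  have "psd (N * 1) (ampliate N E 1 X)" using spec[OF H, of 1] X Xc by simp
  moreover have "mat N N (\<lambda>(a, b). X $$ (a * 1 + r mod 1, b * 1 + c mod 1)) = X" for r c
    using Xc by (intro eq_matI) auto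
  then have "ampliate N E 1 X = E X"
    unfolding ampliate_def using EXc by (intro eq_matI) auto
  ultimately show ?thesis by simp
qed

lemma cptp_zero:
  assumes E: "cptp N E"
  shows "E (0\<^sub>m N N) = 0\<^sub>m N N"
proof -
  have H: "\<forall>c. \<forall>X\<in>carrier_mat N N. E (c \<cdot>\<^sub>m X) = c \<cdot>\<^sub>m E X"
    using E unfolding cptp_def by blast
  have "E ((0::complex) \<cdot>\<^sub>m 0\<^sub>m N N) = (0::complex) \<cdot>\<^sub>m E (0\<^sub>m N N)"
    by (rule H[rule_format]) simp
  moreover have "(0::complex) \<cdot>\<^sub>m 0\<^sub>m N N = 0\<^sub>m N N" by (intro eq_matI) auto
  moreover have "(0::complex) \<cdot>\<^sub>m E (0\<^sub>m N N) = 0\<^sub>m N N"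
    using cptp_carrier[OF E, of "0\<^sub>m N N"] by (intro eq_matI) auto
  ultimately show ?thesis by simp
qed

lemma cptp_sum:
  assumes E: "cptp N E" and S: "finite S" and X: "\<And>k. k \<in> S \<Longrightarrow> X k \<in> carrier_mat N N"
  shows "E (mat N N (\<lambda>(i,j). \<Sum>k\<in>S. X k $$ (i,j))) = mat N N (\<lambda>(i,j). \<Sum>k\<in>S. E (X k) $$ (i,j))"
  using S X
proof (induction S rule: finite_induct)
  case empty
  have L: "mat N N (\<lambda>(i,j). \<Sum>k\<in>{}. X k $$ (i,j)) = 0\<^sub>m N N" by (intro eq_matI) auto
  have R: "mat N N (\<lambda>(i,j). \<Sum>k\<in>{}. E (X k) $$ (i,j)) = 0\<^sub>m N N" by (intro eq_matI) auto
  show ?case by (simp only: L R cptp_zero[OF E])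
next
  case (insert x S)
  have Xx: "X x \<in> carrier_mat N N" using insert by simp
  have EXx: "E (X x) \<in> carrier_mat N N" using cptp_carrier[OF E Xx] .
  have "mat N N (\<lambda>(i,j). \<Sum>k\<in>insert x S. X k $$ (i,j)) = X x + mat N N (\<lambda>(i,j). \<Sum>k\<in>S. X k $$ (i,j))"
    using insert Xx by (intro eq_matI) auto
  then have "E (mat N N (\<lambda>(i,j). \<Sum>k\<in>insert x S. X k $$ (i,j))) = E (X x) + E (mat N N (\<lambda>(i,j). \<Sum>k\<in>S. X k $$ (i,j)))"
    using E Xx unfolding cptp_def by auto
  also have "\<dots> = E (X x) + mat N N (\<lambda>(i,j). \<Sum>k\<in>S. E (X k) $$ (i,j))"
  proof -
    have IH: "E (mat N N (\<lambda>(i,j). \<Sum>k\<in>S. X k $$ (i,j))) = mat N N (\<lambda>(i,j). \<Sum>k\<in>S. E (X k) $$ (i,j))"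
      using insert.IH insert.prems by blast
    show ?thesis by (simp only: IH)
  qed
  also have "\<dots> = mat N N (\<lambda>(i,j). \<Sum>k\<in>insert x S. E (X k) $$ (i,j))"
    using insert EXx by (intro eq_matI) auto
  finally show ?case .
qed

lemma cptp_smult_entry:
  assumes E: "cptp N E" and X: "X \<in> carrier_mat N N" and i: "i < N" and j: "j < N"
  shows "E (c \<cdot>\<^sub>m X) $$ (i,j) = c * E X $$ (i,j)"
proof -
  have "E (c \<cdot>\<^sub>m X) = c \<cdot>\<^sub>m E X" using E X unfolding cptp_def by blast
  then show ?thesis using cptp_carrier[OF E X] i j by simp
qed

lemma ketbra_as_sum:
  assumes v: "v \<in> carrier_vec N"
  shows "ketbra v = mat N N (\<lambda>(r,c). \<Sum>k\<in>{..<N}\<times>{..<N}. ((v $ fst k * cnj (v $ snd k)) \<cdot>\<^sub>m emat N (fst k) (snd k)) $$ (r,c))"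
proof (rule eq_matI)
  fix r c assume r: "r < dim_row (mat N N (\<lambda>(r,c). \<Sum>k\<in>{..<N}\<times>{..<N}. ((v $ fst k * cnj (v $ snd k)) \<cdot>\<^sub>m emat N (fst k) (snd k)) $$ (r,c)))"
    and c: "c < dim_col (mat N N (\<lambda>(r,c). \<Sum>k\<in>{..<N}\<times>{..<N}. ((v $ fst k * cnj (v $ snd k)) \<cdot>\<^sub>m emat N (fst k) (snd k)) $$ (r,c)))"
  then have r: "r < N" and c: "c < N" by auto
  have "(\<Sum>k\<in>{..<N}\<times>{..<N}. ((v $ fst k * cnj (v $ snd k)) \<cdot>\<^sub>m emat N (fst k) (snd k)) $$ (r,c))
     = (\<Sum>k\<in>{..<N}\<times>{..<N}. if k = (r,c) then v $ r * cnj (v $ c) else 0)"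
    using r c by (intro sum.cong refl) (auto simp: emat_def)
  also have "\<dots> = v $ r * cnj (v $ c)" using r c by (simp add: sum.delta)
  finally show "ketbra v $$ (r,c) = mat N N (\<lambda>(r,c). \<Sum>k\<in>{..<N}\<times>{..<N}. ((v $ fst k * cnj (v $ snd k)) \<cdot>\<^sub>m emat N (fst k) (snd k)) $$ (r,c)) $$ (r,c)"
    using r c v by (simp add: ketbra_entry)
qed (use v in \<open>auto simp: ketbra_def\<close>)

lemma E_ketbra_entry:
  assumes E: "cptp N E" and v: "v \<in> carrier_vec N" and y: "y < N" and x: "x < N"
  shows "E (ketbra v) $$ (y,x) = (\<Sum>j<N. \<Sum>i<N. v $ j * cnj (v $ i) * E (emat N j i) $$ (y,x))"
proof -
  have "E (ketbra v) = mat N N (\<lambda>(r,c). \<Sum>k\<in>{..<N}\<times>{..<N}. E ((v $ fst k * cnj (v $ snd k)) \<cdot>\<^sub>m emat N (fst k) (snd k)) $$ (r,c))"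
    unfolding ketbra_as_sum[OF v] by (rule cptp_sum[OF E]) auto
  then have "E (ketbra v) $$ (y,x) = (\<Sum>k\<in>{..<N}\<times>{..<N}. E ((v $ fst k * cnj (v $ snd k)) \<cdot>\<^sub>m emat N (fst k) (snd k)) $$ (y,x))"
    using x y by simp
  also have "\<dots> = (\<Sum>k\<in>{..<N}\<times>{..<N}. v $ fst k * cnj (v $ snd k) * E (emat N (fst k) (snd k)) $$ (y,x))"
    using x y by (intro sum.cong refl) (simp add: cptp_smult_entry[OF E])
  also have "\<dots> = (\<Sum>j<N. \<Sum>i<N. v $ j * cnj (v $ i) * E (emat N j i) $$ (y,x))"
    by (simp add: sum.cartesian_product split_def)
  finally show ?thesis .
qed

lemma swap22:
  "(\<Sum>a\<in>A. \<Sum>b\<in>B. \<Sum>c\<in>C. \<Sum>d\<in>D. f a b c d) = (\<Sum>c\<in>C. \<Sum>d\<in>D. \<Sum>a\<in>A. \<Sum>b\<in>B. f a b c d)"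
proof -
  have "(\<Sum>a\<in>A. \<Sum>b\<in>B. \<Sum>c\<in>C. \<Sum>d\<in>D. f a b c d) = (\<Sum>c\<in>C. \<Sum>a\<in>A. \<Sum>b\<in>B. \<Sum>d\<in>D. f a b c d)"
    by (rule swap_out)
  also have "\<dots> = (\<Sum>c\<in>C. \<Sum>d\<in>D. \<Sum>a\<in>A. \<Sum>b\<in>B. f a b c d)"
    by (rule sum.cong[OF refl], rule swap_out)
  finally show ?thesis .
qed

lemma qf_hs_adjoint:
  assumes E: "cptp N E" and \<phi>: "\<phi> \<in> carrier_vec N" and v: "v \<in> carrier_vec N"
  shows "qf N (hs_adjoint N E (ketbra \<phi>)) v = qf N (E (ketbra v)) \<phi>"
proof -
  define T where "T i j y x = cnj (v $ i) * v $ j * (cnj (\<phi> $ y) * \<phi> $ x) * E (emat N j i) $$ (y,x)" for i j y x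
  have "qf N (hs_adjoint N E (ketbra \<phi>)) v = (\<Sum>i<N. \<Sum>j<N. \<Sum>x<N. \<Sum>y<N. T i j y x)"
    unfolding qf_def T_def using \<phi>
    by (intro sum.cong refl)
       (simp add: hs_adj_entry[OF E] ketbra_entry sum_distrib_left sum_distrib_right mult_ac)
  also have "\<dots> = (\<Sum>x<N. \<Sum>y<N. \<Sum>i<N. \<Sum>j<N. T i j y x)" by (rule swap22)
  also have "\<dots> = (\<Sum>y<N. \<Sum>x<N. \<Sum>j<N. \<Sum>i<N. T i j y x)"
    by (subst sum.swap) (intro sum.cong refl sum.swap)
  also have "\<dots> = qf N (E (ketbra v)) \<phi>"
    unfolding qf_def T_def using v
    by (intro sum.cong refl)
       (simp add: E_ketbra_entry[OF E] sum_distrib_left sum_distrib_right mult_ac)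
  finally show ?thesis .
qed

lemma psd_hs_adjoint:
  assumes E: "cptp N E" and \<phi>: "\<phi> \<in> carrier_vec N"
  shows "psd N (hs_adjoint N E (ketbra \<phi>))"
  unfolding psd_iff
proof (intro conjI ballI)
  show "hs_adjoint N E (ketbra \<phi>) \<in> carrier_mat N N" by simp
  fix v :: "complex vec" assume v: "v \<in> carrier_vec N"
  have "psd N (E (ketbra v))" by (rule cptp_pos[OF E psd_ketbra[OF v]])
  then show "Im (qf N (hs_adjoint N E (ketbra \<phi>)) v) = 0" "Re (qf N (hs_adjoint N E (ketbra \<phi>)) v) \<ge> 0"
    unfolding qf_hs_adjoint[OF E \<phi> v] using psd_qf \<phi> by blast+
qed

lemma divmod_bounds: "r < N*N \<Longrightarrow> r div N < N \<and> r mod (N::nat) < N"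
proof -
  assume r: "r < N*N"
  then have "N > 0" by (cases N) auto
  then show ?thesis using r by (auto simp: less_mult_imp_div_less)
qed

lemma qf_kron_sum:
  assumes A: "A \<in> carrier_mat N N" and B: "B \<in> carrier_mat N N"
    and FA: "\<And>k. k \<in> S1 \<Longrightarrow> FA k \<in> carrier_mat N N"
    and FB: "\<And>l. l \<in> S2 \<Longrightarrow> FB l \<in> carrier_mat N N"
    and dA: "\<And>i j. i < N \<Longrightarrow> j < N \<Longrightarrow> A $$ (i,j) = (\<Sum>k\<in>S1. FA k $$ (i,j))"
    and dB: "\<And>i j. i < N \<Longrightarrow> j < N \<Longrightarrow> B $$ (i,j) = (\<Sum>l\<in>S2. FB l $$ (i,j))"
  shows "qf (N*N) (kron A B) \<psi> = (\<Sum>k\<in>S1. \<Sum>l\<in>S2. qf (N*N) (kron (FA k) (FB l)) \<psi>)"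
proof -
  have "qf (N*N) (kron A B) \<psi> = (\<Sum>kl\<in>S1\<times>S2. qf (N*N) (kron (FA (fst kl)) (FB (snd kl))) \<psi>)"
  proof (rule qf_sum)
    fix r c assume r: "r < N*N" and c: "c < N*N"
    note b = divmod_bounds[OF r] divmod_bounds[OF c]
    have "kron A B $$ (r,c) = (\<Sum>k\<in>S1. FA k $$ (r div N, c div N)) * (\<Sum>l\<in>S2. FB l $$ (r mod N, c mod N))"
      using b by (simp add: kron_entry[OF A B r c] dA dB)
    also have "\<dots> = (\<Sum>kl\<in>S1\<times>S2. FA (fst kl) $$ (r div N, c div N) * FB (snd kl) $$ (r mod N, c mod N))"
      by (simp add: sum_product sum.cartesian_product split_def)
    also have "\<dots> = (\<Sum>kl\<in>S1\<times>S2. kron (FA (fst kl)) (FB (snd kl)) $$ (r,c))"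
      using r c FA FB by (intro sum.cong refl) (auto simp: kron_entry[where N=N])
    finally show "kron A B $$ (r,c) = (\<Sum>kl\<in>S1\<times>S2. kron (FA (fst kl)) (FB (snd kl)) $$ (r,c))" .
  qed
  also have "\<dots> = (\<Sum>k\<in>S1. \<Sum>l\<in>S2. qf (N*N) (kron (FA k) (FB l)) \<psi>)"
    by (simp add: sum.cartesian_product split_def)
  finally show ?thesis .
qed

lemma qf_kron_ketbra:
  assumes a: "a \<in> carrier_vec N" and b: "b \<in> carrier_vec N"
  shows "qf (N*N) (kron (ketbra a) (ketbra b)) \<psi> =
         qf (N*N) (ketbra (vec (N*N) (\<lambda>r. a $ (r div N) * b $ (r mod N)))) \<psi>"
proof -
  have "qf (N*N) (kron (ketbra a) (ketbra b)) \<psi> = 1 * qf (N*N) (ketbra (vec (N*N) (\<lambda>r. a $ (r div N) * b $ (r mod N)))) \<psi>"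
  proof (rule qf_scale)
    fix r c assume r: "r < N*N" and c: "c < N*N"
    note bd = divmod_bounds[OF r] divmod_bounds[OF c]
    show "kron (ketbra a) (ketbra b) $$ (r,c) = 1 * ketbra (vec (N*N) (\<lambda>r. a $ (r div N) * b $ (r mod N))) $$ (r,c)"
      using r c bd a b by (simp add: kron_entry[where N=N] ketbra_entry mult_ac)
  qed
  then show ?thesis by simp
qed

lemma K_phi_nonneg:
  assumes EA: "cptp N EA" and EB: "cptp N EB"
    and a: "\<phi>a \<in> carrier_vec N" and b: "\<phi>b \<in> carrier_vec N"
  shows "Re (qf (N*N) (K_phi N EA EB \<phi>a \<phi>b) \<psi>) \<ge> 0"
proof -
  obtain m1 :: nat and us1 where us1: "\<forall>l<m1. us1 l \<in> carrier_vec N"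
    and d1: "\<forall>i<N. \<forall>j<N. hs_adjoint N EA (ketbra \<phi>a) $$ (i,j) = (\<Sum>l<m1. us1 l $ i * cnj (us1 l $ j))"
    using psd_decomp[OF psd_hs_adjoint[OF EA a]] by blast
  obtain m2 :: nat and us2 where us2: "\<forall>l<m2. us2 l \<in> carrier_vec N"
    and d2: "\<forall>i<N. \<forall>j<N. hs_adjoint N EB (ketbra \<phi>b) $$ (i,j) = (\<Sum>l<m2. us2 l $ i * cnj (us2 l $ j))"
    using psd_decomp[OF psd_hs_adjoint[OF EB b]] by blast
  have "qf (N*N) (K_phi N EA EB \<phi>a \<phi>b) \<psi> =
     (\<Sum>k<m1. \<Sum>l<m2. qf (N*N) (kron (ketbra (us1 k)) (ketbra (us2 l))) \<psi>)"
    unfolding K_phi_def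
    by (rule qf_kron_sum) (use us1 us2 d1 d2 in \<open>auto simp: ketbra_entry intro!: sum.cong\<close>)
  also have "\<dots> = (\<Sum>k<m1. \<Sum>l<m2. qf (N*N) (ketbra (vec (N*N) (\<lambda>r. us1 k $ (r div N) * us2 l $ (r mod N)))) \<psi>)"
    using us1 us2 by (intro sum.cong refl) (simp add: qf_kron_ketbra)
  finally have eq: "qf (N*N) (K_phi N EA EB \<phi>a \<phi>b) \<psi> = \<dots>" .
  show ?thesis unfolding eq Re_sum
    by (intro sum_nonneg) (use qf_ketbra_nonneg in \<open>auto\<close>)
qed

lemma hs_adj_sum:
  assumes E: "cptp N E" and M: "M \<in> carrier_mat N N" and F: "\<And>k. k \<in> S \<Longrightarrow> F k \<in> carrier_mat N N"
    and d: "\<And>x y. x < N \<Longrightarrow> y < N \<Longrightarrow> M $$ (x,y) = (\<Sum>k\<in>S. F k $$ (x,y))"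
    and p: "p < N" and q: "q < N"
  shows "hs_adjoint N E M $$ (p,q) = (\<Sum>k\<in>S. hs_adjoint N E (F k) $$ (p,q))"
proof -
  have "hs_adjoint N E M $$ (p,q) = (\<Sum>x<N. \<Sum>y<N. \<Sum>k\<in>S. F k $$ (x,y) * E (emat N q p) $$ (y,x))"
    unfolding hs_adj_entry[OF E p q M] by (intro sum.cong refl) (simp add: d sum_distrib_right)
  also have "\<dots> = (\<Sum>k\<in>S. \<Sum>x<N. \<Sum>y<N. F k $$ (x,y) * E (emat N q p) $$ (y,x))"
    by (rule swap_out)
  also have "\<dots> = (\<Sum>k\<in>S. hs_adjoint N E (F k) $$ (p,q))"
    using F by (intro sum.cong refl) (simp add: hs_adj_entry[OF E p q])
  finally show ?thesis .
qed

lemma hs_adj_scale: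
  assumes E: "cptp N E" and M: "M \<in> carrier_mat N N" and M': "M' \<in> carrier_mat N N"
    and d: "\<And>x y. x < N \<Longrightarrow> y < N \<Longrightarrow> M $$ (x,y) = c * M' $$ (x,y)"
    and p: "p < N" and q: "q < N"
  shows "hs_adjoint N E M $$ (p,q) = c * hs_adjoint N E M' $$ (p,q)"
  unfolding hs_adj_entry[OF E p q M] hs_adj_entry[OF E p q M']
  by (simp add: d sum_distrib_left mult_ac)

lemma unit_carrier: "is_unit_vector n v \<Longrightarrow> v \<in> carrier_vec n"
  unfolding is_unit_vector_def by blast

lemma normalize:
  assumes N: "N \<ge> 1" and u: "u \<in> carrier_vec N"
  shows "\<exists>\<phi> c. is_unit_vector N \<phi> \<and> c \<ge> 0 \<and>
     (\<forall>x<N. \<forall>y<N. ketbra u $$ (x,y) = complex_of_real c * ketbra \<phi> $$ (x,y))"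
proof -
  define n2 where "n2 = (\<Sum>i<N. (cmod (u $ i))^2)"
  have n20: "n2 \<ge> 0" unfolding n2_def by (intro sum_nonneg) auto
  show ?thesis
  proof (cases "n2 = 0")
    case True
    then have "\<forall>i\<in>{..<N}. (cmod (u $ i))^2 = 0" unfolding n2_def
      by (subst sum_nonneg_eq_0_iff[symmetric]) auto
    then have u0: "u $ i = 0" if "i < N" for i using that by auto
    have e: "(cmod (unit_vec N 0 $ i))^2 = (if i = 0 then 1 else 0)" if "i < N" for i
      using that by (simp add: unit_vec_def)
    have "(\<Sum>i<N. (cmod (unit_vec N 0 $ i))^2) = (\<Sum>i<N. if i = 0 then 1 else 0)"
      by (intro sum.cong refl) (simp add: e)
    also have "\<dots> = 1" using N by (simp add: sum.delta)
    finally have "is_unit_vector N (unit_vec N 0)" unfolding is_unit_vector_def by simp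
    moreover have "\<forall>x<N. \<forall>y<N. ketbra u $$ (x,y) = complex_of_real 0 * ketbra (unit_vec N 0) $$ (x,y)"
      using u u0 by (simp add: ketbra_entry)
    ultimately show ?thesis by blast
  next
    case False
    then have np: "n2 > 0" using n20 by simp
    define \<sigma> where "\<sigma> = sqrt n2"
    have sp: "\<sigma> > 0" unfolding \<sigma>_def using np by simp
    have ss: "\<sigma>^2 = n2" unfolding \<sigma>_def using np by simp
    define \<phi> where "\<phi> = vec N (\<lambda>i. u $ i / complex_of_real \<sigma>)"
    have "(\<Sum>i<N. (cmod (\<phi> $ i))^2) = (\<Sum>i<N. (cmod (u $ i))^2 / \<sigma>^2)"
      unfolding \<phi>_def by (intro sum.cong refl) (simp add: norm_divide power_divide)
    also have "\<dots> = 1" using np unfolding sum_divide_distrib[symmetric] ss n2_def[symmetric] by simp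
    finally have "is_unit_vector N \<phi>" unfolding is_unit_vector_def \<phi>_def by simp
    moreover have "\<forall>x<N. \<forall>y<N. ketbra u $$ (x,y) = complex_of_real (\<sigma>^2) * ketbra \<phi> $$ (x,y)"
    proof (intro allI impI)
      fix x y assume x: "x < N" and y: "y < N"
      have "ketbra \<phi> $$ (x,y) = u $ x * cnj (u $ y) / complex_of_real (\<sigma>^2)"
        unfolding \<phi>_def using x y by (simp add: ketbra_def power2_eq_square)
      then show "ketbra u $$ (x,y) = complex_of_real (\<sigma>^2) * ketbra \<phi> $$ (x,y)"
        using u x y sp by (simp add: ketbra_entry)
    qed
    ultimately show ?thesis using sp by (intro exI[of _ \<phi>] exI[of _ "\<sigma>^2"]) auto
  qed
qed

lemma K_phi_scale:
  assumes EA: "cptp N EA" and EB: "cptp N EB"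
    and u: "u \<in> carrier_vec N" and v: "v \<in> carrier_vec N"
    and a: "\<phi>a \<in> carrier_vec N" and b: "\<phi>b \<in> carrier_vec N"
    and du: "\<forall>x<N. \<forall>y<N. ketbra u $$ (x,y) = complex_of_real c * ketbra \<phi>a $$ (x,y)"
    and dv: "\<forall>x<N. \<forall>y<N. ketbra v $$ (x,y) = complex_of_real d * ketbra \<phi>b $$ (x,y)"
  shows "qf (N*N) (K_phi N EA EB u v) \<psi> = complex_of_real (c * d) * qf (N*N) (K_phi N EA EB \<phi>a \<phi>b) \<psi>"
proof (rule qf_scale)
  fix r s assume r: "r < N*N" and s: "s < N*N"
  have b1: "r div N < N" "r mod N < N" using divmod_bounds[OF r] by auto
  have b2: "s div N < N" "s mod N < N" using divmod_bounds[OF s] by auto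
  have hA: "hs_adjoint N EA (ketbra u) $$ (r div N, s div N) = complex_of_real c * hs_adjoint N EA (ketbra \<phi>a) $$ (r div N, s div N)"
    by (rule hs_adj_scale[OF EA ketbra_carrier[OF u] ketbra_carrier[OF a]]) (use du b1 b2 in auto)
  have hB: "hs_adjoint N EB (ketbra v) $$ (r mod N, s mod N) = complex_of_real d * hs_adjoint N EB (ketbra \<phi>b) $$ (r mod N, s mod N)"
    by (rule hs_adj_scale[OF EB ketbra_carrier[OF v] ketbra_carrier[OF b]]) (use dv b1 b2 in auto)
  show "K_phi N EA EB u v $$ (r,s) = complex_of_real (c * d) * K_phi N EA EB \<phi>a \<phi>b $$ (r,s)"
    unfolding K_phi_def using r s
    by (simp add: kron_entry[where N=N] hA hB)
qed

lemma Hs_elem: "\<rho> \<in> Hs N s \<Longrightarrow> \<exists>\<psi>. \<rho> = ketbra \<psi> \<and> is_unit_vector (N*N) \<psi>"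
  unfolding Hs_def by blast

lemma f_Hs:
  assumes K: "K \<in> carrier_mat (N*N) (N*N)" and \<psi>: "is_unit_vector (N*N) \<psi>"
  shows "Re (mtrace (K * ketbra \<psi>)) = Re (qf (N*N) K \<psi>)"
  using mtrace_ketbra[OF K unit_carrier[OF \<psi>]] by simp

lemma unit_entry_le: "is_unit_vector n \<psi> \<Longrightarrow> i < n \<Longrightarrow> cmod (\<psi> $ i) \<le> 1"
proof -
  assume u: "is_unit_vector n \<psi>" and i: "i < n"
  have "(cmod (\<psi> $ i))^2 \<le> (\<Sum>j<n. (cmod (\<psi> $ j))^2)"
    using i by (intro member_le_sum) auto
  also have "\<dots> = 1" using u unfolding is_unit_vector_def by blast
  finally have "(cmod (\<psi> $ i))^2 \<le> 1" .
  then show ?thesis by (simp add: power_le_one_iff abs_square_le_1)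
qed

lemma qf_bound:
  assumes u: "is_unit_vector n \<psi>"
  shows "\<bar>Re (qf n K \<psi>)\<bar> \<le> (\<Sum>i<n. \<Sum>j<n. cmod (K $$ (i,j)))"
proof -
  have "\<bar>Re (qf n K \<psi>)\<bar> \<le> cmod (qf n K \<psi>)" by (rule abs_Re_le_cmod)
  also have "\<dots> \<le> (\<Sum>i<n. cmod (\<Sum>j<n. cnj (\<psi> $ i) * K $$ (i, j) * \<psi> $ j))"
    unfolding qf_def by (rule norm_sum)
  also have "\<dots> \<le> (\<Sum>i<n. \<Sum>j<n. cmod (cnj (\<psi> $ i) * K $$ (i, j) * \<psi> $ j))"
    by (intro sum_mono norm_sum)
  also have "\<dots> \<le> (\<Sum>i<n. \<Sum>j<n. cmod (K $$ (i,j)))"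
  proof (intro sum_mono)
    fix i j assume i: "i \<in> {..<n}" and j: "j \<in> {..<n}"
    have a: "cmod (\<psi> $ i) \<le> 1" "cmod (\<psi> $ j) \<le> 1" using unit_entry_le[OF u] i j by auto
    have "cmod (cnj (\<psi> $ i) * K $$ (i, j) * \<psi> $ j) = cmod (\<psi> $ i) * cmod (K $$ (i, j)) * cmod (\<psi> $ j)"
      by (simp add: norm_mult)
    also have "\<dots> \<le> 1 * cmod (K $$ (i, j)) * 1"
      using a by (intro mult_mono) auto
    finally show "cmod (cnj (\<psi> $ i) * K $$ (i, j) * \<psi> $ j) \<le> cmod (K $$ (i,j))" by simp
  qed
  finally show ?thesis .
qed

lemma f_bound:
  assumes K: "K \<in> carrier_mat (N*N) (N*N)" and \<rho>: "\<rho> \<in> Hs N s"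
  shows "\<bar>Re (mtrace (K * \<rho>))\<bar> \<le> (\<Sum>i<N*N. \<Sum>j<N*N. cmod (K $$ (i,j)))"
proof -
  obtain \<psi> where "\<rho> = ketbra \<psi>" and u: "is_unit_vector (N*N) \<psi>" using Hs_elem[OF \<rho>] by blast
  then show ?thesis using f_Hs[OF K u] qf_bound[OF u] by simp
qed

lemma ratio_to_ineq:
  assumes ne: "Hs N s \<noteq> {}"
    and bd: "\<And>\<rho>. \<rho> \<in> Hs N s \<Longrightarrow> \<bar>Re (mtrace (K * \<rho>))\<bar> \<le> B"
    and nn: "\<And>\<rho>. \<rho> \<in> Hs N s \<Longrightarrow> Re (mtrace (K * \<rho>)) \<ge> 0"
    and r: "r > 0" and R: "J_ratio N K s \<le> ereal r"
    and \<rho>: "\<rho> \<in> Hs N s" and \<rho>': "\<rho>' \<in> Hs N s"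
  shows "Re (mtrace (K * \<rho>)) \<le> r * Re (mtrace (K * \<rho>'))"
proof -
  define V where "V = (\<lambda>\<rho>. Re (mtrace (K * \<rho>))) ` Hs N s"
  have Vne: "V \<noteq> {}" using ne unfolding V_def by simp
  have ba: "bdd_above V"
  proof (rule bdd_aboveI)
    fix x assume "x \<in> V"
    then obtain \<sigma> where \<sigma>: "\<sigma> \<in> Hs N s" and x: "x = Re (mtrace (K * \<sigma>))" unfolding V_def by blast
    show "x \<le> B" using bd[OF \<sigma>] unfolding x by linarith
  qed
  have bb: "bdd_below V"
  proof (rule bdd_belowI)
    fix x assume "x \<in> V"
    then obtain \<sigma> where \<sigma>: "\<sigma> \<in> Hs N s" and x: "x = Re (mtrace (K * \<sigma>))" unfolding V_def by blast
    show "0 \<le> x" using nn[OF \<sigma>] unfolding x .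
  qed
  have up: "Re (mtrace (K * \<rho>)) \<le> Jmax N K s"
    unfolding Jmax_def V_def[symmetric] using ba \<rho> by (intro cSup_upper) (auto simp: V_def)
  have lo: "Jmin N K s \<le> Re (mtrace (K * \<rho>'))"
    unfolding Jmin_def V_def[symmetric] using bb \<rho>' by (intro cInf_lower) (auto simp: V_def)
  have Jmin0: "Jmin N K s \<ge> 0"
    unfolding Jmin_def V_def[symmetric] using Vne nn by (intro cInf_greatest) (auto simp: V_def)
  show ?thesis
  proof (cases "Jmin N K s > 0")
    case True
    then have "Jmax N K s / Jmin N K s \<le> r" using R unfolding J_ratio_def by simp
    then have "Jmax N K s \<le> r * Jmin N K s" using True by (simp add: field_simps)
    also have "\<dots> \<le> r * Re (mtrace (K * \<rho>'))" using lo r by simp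
    finally show ?thesis using up by simp
  next
    case False
    then have "\<not> Jmax N K s > 0" using R unfolding J_ratio_def by auto
    then have "Re (mtrace (K * \<rho>)) \<le> 0" using up by simp
    also have "0 \<le> r * Re (mtrace (K * \<rho>'))" using nn[OF \<rho>'] r by simp
    finally show ?thesis .
  qed
qed

lemma ineq_to_ratio:
  assumes ne: "Hs N s \<noteq> {}"
    and e: "e \<ge> 1"
    and H: "\<And>\<rho> \<rho>'. \<rho> \<in> Hs N s \<Longrightarrow> \<rho>' \<in> Hs N s \<Longrightarrow> Re (mtrace (K * \<rho>)) \<le> e * Re (mtrace (K * \<rho>'))"
  shows "J_ratio N K s \<le> ereal e"
proof -
  define V where "V = (\<lambda>\<rho>. Re (mtrace (K * \<rho>))) ` Hs N s"
  have Vne: "V \<noteq> {}" using ne unfolding V_def by simp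
  have ep: "e > 0" using e by simp
  have "Jmax N K s \<le> e * Re (mtrace (K * \<rho>'))" if \<rho>': "\<rho>' \<in> Hs N s" for \<rho>'
    unfolding Jmax_def V_def[symmetric] using Vne H[OF _ \<rho>'] by (intro cSup_least) (auto simp: V_def)
  then have "Jmax N K s / e \<le> Re (mtrace (K * \<rho>'))" if \<rho>': "\<rho>' \<in> Hs N s" for \<rho>'
    using that ep by (simp add: field_simps)
  then have "Jmax N K s / e \<le> Jmin N K s"
    unfolding Jmin_def V_def[symmetric] using Vne by (intro cInf_greatest) (auto simp: V_def)
  then have M: "Jmax N K s \<le> e * Jmin N K s" using ep by (simp add: field_simps)
  show ?thesis
  proof (cases "Jmin N K s > 0")
    case True
    then show ?thesis using M unfolding J_ratio_def by (simp add: field_simps)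
  next
    case False
    then have "e * Jmin N K s \<le> 0" using ep by (simp add: mult_nonneg_nonpos)
    then have "Jmax N K s \<le> 0" using M by linarith
    then show ?thesis using False e unfolding J_ratio_def by simp
  qed
qed

lemma vn_entropy_maxmixed:
  assumes N: "N \<ge> 1"
  shows "vn_entropy (mat N N (\<lambda>(a,b). if a = b then complex_of_real (1 / real N) else 0)) = ln (real N)"
proof -
  define x where "x = complex_of_real (1 / real N)"
  define D where "D = mat N N (\<lambda>(a,b). if a = b then x else 0)"
  have Dc: "D \<in> carrier_mat N N" unfolding D_def by simp
  have ut: "upper_triangular D" unfolding D_def upper_triangular_def by auto
  have diag: "diag_mat D = replicate N x"
  proof -
    have "diag_mat D = map (\<lambda>_. x) [0..<N]"
      unfolding diag_mat_def D_def by (intro map_cong) auto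
    then show ?thesis by (simp add: map_replicate_const)
  qed
  have cp: "char_poly D = [:- x, 1:] ^ N"
    unfolding char_poly_upper_triangular[OF Dc ut] diag by (simp add: prod_list_replicate)
  have pr: "proots (char_poly D) = replicate_mset N x"
    unfolding cp proots_power using proots_linear_factor[of "- x"] by (simp add: repeat_mset_replicate_mset)
  have Rx: "Re x = 1 / real N" unfolding x_def by simp
  have Np: "real N > 0" using N by simp
  have "vn_entropy D = - (real N * (1 / real N * ln (1 / real N)))"
    unfolding vn_entropy_def pr using Np by (simp add: Rx sum_mset_replicate_mset)
  also have "\<dots> = ln (real N)" using Np by (simp add: ln_div)
  finally show ?thesis unfolding D_def x_def .
qed

lemma Hs_nonempty:
  assumes N: "N \<ge> 1" and s: "s \<le> ln (real N)"
  shows "Hs N s \<noteq> {}"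
proof -
  define c where "c = 1 / sqrt (real N)"
  have Np: "real N > 0" using N by simp
  have cc: "c * c = 1 / real N" unfolding c_def using Np by (simp add: real_sqrt_mult[symmetric])
  define \<psi> where "\<psi> = vec (N*N) (\<lambda>r. if r div N = r mod N then complex_of_real c else 0)"
  have \<psi>c: "\<psi> \<in> carrier_vec (N*N)" unfolding \<psi>_def by simp
  have \<psi>e: "\<psi> $ (p*N+q) = (if p = q then complex_of_real c else 0)" if "p < N" "q < N" for p q
    unfolding \<psi>_def using that pair_bound[OF that] by simp
  have "(\<Sum>r<N*N. (cmod (\<psi> $ r))^2) = (\<Sum>p<N. \<Sum>q<N. (cmod (\<psi> $ (p*N+q)))^2)"
    by (rule sum_pair_split)
  also have "\<dots> = (\<Sum>p<N. \<Sum>q<N. if q = p then c * c else 0)"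
    by (intro sum.cong refl) (auto simp: \<psi>e power2_eq_square)
  also have "\<dots> = real N * (c * c)" by simp
  also have "\<dots> = 1" using cc Np by simp
  finally have u: "is_unit_vector (N*N) \<psi>" unfolding is_unit_vector_def using \<psi>c by simp
  have pt: "ptrace_B N (ketbra \<psi>) = mat N N (\<lambda>(a,b). if a = b then complex_of_real (1 / real N) else 0)"
  proof (rule eq_matI)
    fix a b assume a: "a < dim_row (mat N N (\<lambda>(a,b). if a = b then complex_of_real (1 / real N) else 0))"
      and b: "b < dim_col (mat N N (\<lambda>(a,b). if a = b then complex_of_real (1 / real N) else 0))"
    then have a: "a < N" and b: "b < N" by auto
    have "ptrace_B N (ketbra \<psi>) $$ (a,b) = (\<Sum>q<N. \<psi> $ (a*N+q) * cnj (\<psi> $ (b*N+q)))"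
      unfolding ptrace_B_def using a b \<psi>c pair_bound[OF a] pair_bound[OF b] by (simp add: ketbra_entry)
    also have "\<dots> = (\<Sum>q<N. if q = a then (if a = b then complex_of_real (c * c) else 0) else 0)"
      using a b by (intro sum.cong refl) (auto simp: \<psi>e)
    also have "\<dots> = (if a = b then complex_of_real (1 / real N) else 0)" using a cc by simp
    finally show "ptrace_B N (ketbra \<psi>) $$ (a,b) = mat N N (\<lambda>(a,b). if a = b then complex_of_real (1 / real N) else 0) $$ (a,b)"
      using a b by simp
  qed (auto simp: ptrace_B_def)
  have "ent_entropy N \<psi> = ln (real N)"
    unfolding ent_entropy_def pt by (rule vn_entropy_maxmixed[OF N])
  then have "ketbra \<psi> \<in> Hs N s" unfolding Hs_def using u s by auto
  then show ?thesis by blast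
qed

lemma qf_one: "qf n (1\<^sub>m n) v = (\<Sum>i<n. cnj (v $ i) * v $ i)"
proof -
  have "qf n (1\<^sub>m n) v = (\<Sum>i<n. \<Sum>j<n. if j = i then cnj (v $ i) * v $ j else 0)"
    unfolding qf_def by (intro sum.cong refl) auto
  also have "\<dots> = (\<Sum>i<n. cnj (v $ i) * v $ i)" by simp
  finally show ?thesis .
qed

lemma cnj_mult_self: "Im (cnj z * z) = 0 \<and> Re (cnj z * z) = (cmod z)^2"
proof -
  have "z * cnj z = complex_of_real ((cmod z)^2)" by (rule complex_norm_square[symmetric])
  then have "cnj z * z = complex_of_real ((cmod z)^2)" by (simp add: mult.commute)
  then show ?thesis by simp
qed

lemma psd_one: "psd n (1\<^sub>m n)"
  unfolding psd_iff qf_one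
  by (auto simp: Im_sum Re_sum cnj_mult_self intro!: sum_nonneg)

lemma povm_trivial: "povm N 1 (\<lambda>_. 1\<^sub>m N)"
  unfolding povm_def using psd_one by auto

lemma psd_proj:
  assumes u: "is_unit_vector n \<phi>"
  shows "psd n (1\<^sub>m n - ketbra \<phi>)"
  unfolding psd_iff
proof (intro conjI ballI)
  have \<phi>: "\<phi> \<in> carrier_vec n" using unit_carrier[OF u] .
  show "1\<^sub>m n - ketbra \<phi> \<in> carrier_mat n n" using \<phi> by (intro minus_carrier_mat) simp
  fix v :: "complex vec" assume v: "v \<in> carrier_vec n"
  define z where "z = (\<Sum>i<n. cnj (\<phi> $ i) * v $ i)"
  define S1 where "S1 = (\<Sum>i<n. cnj (v $ i) * v $ i)"
  have w: "(\<Sum>i<n. cnj (v $ i) * \<phi> $ i) = cnj z" unfolding z_def by (simp add: mult.commute)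
  have S3: "(\<Sum>i<n. cnj (\<phi> $ i) * \<phi> $ i) = 1"
  proof -
    have "(\<Sum>i<n. cnj (\<phi> $ i) * \<phi> $ i) = (\<Sum>i<n. complex_of_real ((cmod (\<phi> $ i))^2))"
      by (intro sum.cong refl) (simp only: complex_norm_square mult.commute)
    also have "\<dots> = complex_of_real (\<Sum>i<n. (cmod (\<phi> $ i))^2)" by simp
    also have "\<dots> = 1" using u unfolding is_unit_vector_def by simp
    finally show ?thesis .
  qed
  have "qf n (1\<^sub>m n - ketbra \<phi>) v = (\<Sum>i<n. \<Sum>j<n. (if i = j then cnj (v $ i) * v $ j else 0) - (cnj (v $ i) * \<phi> $ i) * (cnj (\<phi> $ j) * v $ j))"
    unfolding qf_def using \<phi> by (intro sum.cong refl) (auto simp: ketbra_entry algebra_simps)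
  also have "\<dots> = S1 - cnj z * z"
    unfolding S1_def z_def[symmetric] w[symmetric]
    by (simp add: sum_subtractf sum_product[symmetric] z_def)
  finally have q: "qf n (1\<^sub>m n - ketbra \<phi>) v = S1 - cnj z * z" .
  have "(\<Sum>i<n. cnj (v $ i - z * \<phi> $ i) * (v $ i - z * \<phi> $ i)) =
     (\<Sum>i<n. cnj (v $ i) * v $ i - z * (cnj (v $ i) * \<phi> $ i) - cnj z * (cnj (\<phi> $ i) * v $ i) + cnj z * z * (cnj (\<phi> $ i) * \<phi> $ i))"
    by (intro sum.cong refl) (simp add: algebra_simps)
  also have "\<dots> = S1 - z * cnj z - cnj z * z + cnj z * z * 1"
    unfolding S1_def by (simp add: sum.distrib sum_subtractf sum_distrib_left[symmetric] w S3 z_def[symmetric])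
  also have "\<dots> = S1 - cnj z * z" by (simp add: mult.commute)
  finally have q2: "qf n (1\<^sub>m n - ketbra \<phi>) v = (\<Sum>i<n. cnj (v $ i - z * \<phi> $ i) * (v $ i - z * \<phi> $ i))"
    unfolding q by simp
  show "Im (qf n (1\<^sub>m n - ketbra \<phi>) v) = 0" unfolding q2 Im_sum by (simp only: cnj_mult_self sum.neutral_const)
  show "Re (qf n (1\<^sub>m n - ketbra \<phi>) v) \<ge> 0" unfolding q2 Re_sum by (intro sum_nonneg) (simp only: cnj_mult_self zero_le_power2)
qed

lemma povm_rank1:
  assumes u: "is_unit_vector N \<phi>"
  shows "povm N 2 (\<lambda>i. if i = 0 then ketbra \<phi> else 1\<^sub>m N - ketbra \<phi>)"
  unfolding povm_def
proof (intro conjI allI impI)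
  have \<phi>: "\<phi> \<in> carrier_vec N" using unit_carrier[OF u] .
  fix i :: nat assume "i < 2"
  then show "psd N (if i = 0 then ketbra \<phi> else 1\<^sub>m N - ketbra \<phi>)"
    using psd_ketbra[OF \<phi>] psd_proj[OF u] by auto
next
  have \<phi>: "\<phi> \<in> carrier_vec N" using unit_carrier[OF u] .
  fix r c assume r: "r < N" and c: "c < N"
  have "(\<Sum>i<(2::nat). (if i = 0 then ketbra \<phi> else 1\<^sub>m N - ketbra \<phi>) $$ (r, c)) =
     ketbra \<phi> $$ (r,c) + (1\<^sub>m N - ketbra \<phi>) $$ (r,c)"
    by (simp add: numeral_2_eq_2)
  also have "\<dots> = (if r = c then 1 else 0)" using r c \<phi> by simp
  finally show "(\<Sum>i<(2::nat). (if i = 0 then ketbra \<phi> else 1\<^sub>m N - ketbra \<phi>) $$ (r, c)) = (if r = c then 1 else 0)" .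
qed

lemma hs_adj_one:
  assumes E: "cptp N E"
  shows "hs_adjoint N E (1\<^sub>m N) = 1\<^sub>m N"
proof (rule eq_matI)
  fix p q assume p: "p < dim_row (1\<^sub>m N :: complex mat)" and q: "q < dim_col (1\<^sub>m N :: complex mat)"
  then have p: "p < N" and q: "q < N" by auto
  have Ec: "E (emat N q p) \<in> carrier_mat N N" using cptp_carrier[OF E] by simp
  have tr: "mtrace (E (emat N q p)) = mtrace (emat N q p)" using E unfolding cptp_def by simp
  have "hs_adjoint N E (1\<^sub>m N) $$ (p,q) = (\<Sum>x<N. \<Sum>y<N. (if x = y then 1 else 0) * E (emat N q p) $$ (y,x))"
    unfolding hs_adj_entry[OF E p q one_carrier_mat] by (intro sum.cong refl) auto
  also have "\<dots> = (\<Sum>x<N. E (emat N q p) $$ (x,x))"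
  proof (intro sum.cong refl)
    fix x assume "x \<in> {..<N}"
    have eq: "(\<lambda>y. (if x = y then 1 else 0) * E (emat N q p) $$ (y,x)) = (\<lambda>y. if x = y then E (emat N q p) $$ (y,x) else 0)"
      by auto
    show "(\<Sum>y<N. (if x = y then 1 else 0) * E (emat N q p) $$ (y,x)) = E (emat N q p) $$ (x,x)"
      unfolding eq using \<open>x \<in> {..<N}\<close> by (simp add: sum.delta')
  qed
  also have "\<dots> = mtrace (emat N q p)" using Ec tr unfolding mtrace_def by simp
  also have "\<dots> = (\<Sum>x<N. if x = q \<and> x = p then 1 else 0)" unfolding mtrace_def emat_def by simp
  also have "\<dots> = 1\<^sub>m N $$ (p,q)"
  proof (cases "p = q")
    case True then show ?thesis using p q by (simp add: sum.delta)
  next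
    case False
    then have eq: "(\<lambda>x. if x = q \<and> x = p then (1::complex) else 0) = (\<lambda>_. 0)" by auto
    have "(\<Sum>x<N. if x = q \<and> x = p then (1::complex) else 0) = 0" unfolding eq by simp
    then show ?thesis unfolding mtrace_def using p q False by simp
  qed
  finally show "hs_adjoint N E (1\<^sub>m N) $$ (p,q) = 1\<^sub>m N $$ (p,q)" .
qed (auto simp: hs_adjoint_def)

lemma K_phi_carrier[simp]: "K_phi N EA EB a b \<in> carrier_mat (N*N) (N*N)"
  unfolding K_phi_def by simp

lemma Hs_carrier: "\<rho> \<in> Hs N s \<Longrightarrow> \<rho> \<in> carrier_mat (N*N) (N*N)"
  using Hs_elem[of \<rho> N s] unit_carrier by auto

lemma f_K_phi_nonneg:
  assumes EA: "cptp N EA" and EB: "cptp N EB" and a: "a \<in> carrier_vec N" and b: "b \<in> carrier_vec N"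
    and \<rho>: "\<rho> \<in> Hs N s"
  shows "Re (mtrace (K_phi N EA EB a b * \<rho>)) \<ge> 0"
proof -
  obtain \<psi> where r: "\<rho> = ketbra \<psi>" and u: "is_unit_vector (N*N) \<psi>" using Hs_elem[OF \<rho>] by blast
  show ?thesis unfolding r f_Hs[OF K_phi_carrier u] by (rule K_phi_nonneg[OF EA EB a b])
qed

lemma ratio_ge1:
  assumes ne: "Hs N s \<noteq> {}"
    and bd: "\<And>\<rho>. \<rho> \<in> Hs N s \<Longrightarrow> \<bar>Re (mtrace (K * \<rho>))\<bar> \<le> B"
    and nn: "\<And>\<rho>. \<rho> \<in> Hs N s \<Longrightarrow> Re (mtrace (K * \<rho>)) \<ge> 0"
  shows "J_ratio N K s \<ge> 1"
proof -
  define V where "V = (\<lambda>\<rho>. Re (mtrace (K * \<rho>))) ` Hs N s"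
  obtain \<rho>0 where \<rho>0: "\<rho>0 \<in> Hs N s" using ne by blast
  have ba: "bdd_above V"
  proof (rule bdd_aboveI)
    fix x assume "x \<in> V"
    then obtain \<sigma> where \<sigma>: "\<sigma> \<in> Hs N s" and x: "x = Re (mtrace (K * \<sigma>))" unfolding V_def by blast
    show "x \<le> B" using bd[OF \<sigma>] unfolding x by linarith
  qed
  have bb: "bdd_below V"
  proof (rule bdd_belowI)
    fix x assume "x \<in> V"
    then obtain \<sigma> where \<sigma>: "\<sigma> \<in> Hs N s" and x: "x = Re (mtrace (K * \<sigma>))" unfolding V_def by blast
    show "0 \<le> x" using nn[OF \<sigma>] unfolding x .
  qed
  have up: "Re (mtrace (K * \<rho>0)) \<le> Jmax N K s"
    unfolding Jmax_def V_def[symmetric] using ba \<rho>0 by (intro cSup_upper) (auto simp: V_def)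
  have lo: "Jmin N K s \<le> Re (mtrace (K * \<rho>0))"
    unfolding Jmin_def V_def[symmetric] using bb \<rho>0 by (intro cInf_lower) (auto simp: V_def)
  show ?thesis
  proof (cases "Jmin N K s > 0")
    case True
    then have "Jmax N K s / Jmin N K s \<ge> 1" using up lo by simp
    then show ?thesis using True unfolding J_ratio_def by simp
  next
    case False
    then show ?thesis unfolding J_ratio_def by simp
  qed
qed

lemma lm_single:
  assumes EA: "cptp N EA" and EB: "cptp N EB"
    and MA: "MA 0 \<in> carrier_mat N N" and MB: "MB 0 \<in> carrier_mat N N" and \<rho>: "\<rho> \<in> Hs N s"
  shows "lm_prob N EA EB MA MB \<rho> {(0,0)} = Re (mtrace (kron (hs_adjoint N EA (MA 0)) (hs_adjoint N EB (MB 0)) * \<rho>))"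
  unfolding lm_prob_def using trace_identity[OF EA EB MA MB Hs_carrier[OF \<rho>]] by simp

lemma expand_term:
  assumes EA: "cptp N EA" and EB: "cptp N EB"
    and MA: "MA \<in> carrier_mat N N" and MB: "MB \<in> carrier_mat N N"
    and us1: "\<forall>l<m1. us1 l \<in> carrier_vec N"
    and d1: "\<forall>i<N. \<forall>j<N. MA $$ (i,j) = (\<Sum>l<m1. us1 l $ i * cnj (us1 l $ j))"
    and us2: "\<forall>l<m2. us2 l \<in> carrier_vec N"
    and d2: "\<forall>i<N. \<forall>j<N. MB $$ (i,j) = (\<Sum>l<m2. us2 l $ i * cnj (us2 l $ j))"
    and \<rho>: "\<rho> \<in> Hs N s"
  shows "Re (mtrace (kron MA MB * prod_channel N EA EB \<rho>)) =
     (\<Sum>k<m1. \<Sum>l<m2. Re (mtrace (K_phi N EA EB (us1 k) (us2 l) * \<rho>)))"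
proof -
  obtain \<psi> where r: "\<rho> = ketbra \<psi>" and u: "is_unit_vector (N*N) \<psi>" using Hs_elem[OF \<rho>] by blast
  have dA: "hs_adjoint N EA MA $$ (i,j) = (\<Sum>k<m1. hs_adjoint N EA (ketbra (us1 k)) $$ (i,j))"
    if "i < N" "j < N" for i j
    by (rule hs_adj_sum[OF EA MA]) (use us1 d1 that in \<open>auto simp: ketbra_entry intro!: sum.cong\<close>)
  have dB: "hs_adjoint N EB MB $$ (i,j) = (\<Sum>k<m2. hs_adjoint N EB (ketbra (us2 k)) $$ (i,j))"
    if "i < N" "j < N" for i j
    by (rule hs_adj_sum[OF EB MB]) (use us2 d2 that in \<open>auto simp: ketbra_entry intro!: sum.cong\<close>)
  have "Re (mtrace (kron MA MB * prod_channel N EA EB \<rho>)) =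
        Re (mtrace (kron (hs_adjoint N EA MA) (hs_adjoint N EB MB) * \<rho>))"
    using trace_identity[OF EA EB MA MB Hs_carrier[OF \<rho>]] by simp
  also have "\<dots> = Re (qf (N*N) (kron (hs_adjoint N EA MA) (hs_adjoint N EB MB)) \<psi>)"
    unfolding r by (rule f_Hs[OF kron_carrier[OF hs_adj_carrier hs_adj_carrier] u])
  also have "qf (N*N) (kron (hs_adjoint N EA MA) (hs_adjoint N EB MB)) \<psi> =
      (\<Sum>k<m1. \<Sum>l<m2. qf (N*N) (kron (hs_adjoint N EA (ketbra (us1 k))) (hs_adjoint N EB (ketbra (us2 l)))) \<psi>)"
    by (rule qf_kron_sum) (auto simp: dA dB)
  also have "Re \<dots> = (\<Sum>k<m1. \<Sum>l<m2. Re (mtrace (K_phi N EA EB (us1 k) (us2 l) * \<rho>)))"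
    unfolding Re_sum r K_phi_def by (simp add: f_Hs[OF kron_carrier[OF hs_adj_carrier hs_adj_carrier] u])
  finally show ?thesis .
qed

lemma KL:
  assumes N: "N \<ge> 1" and EA: "cptp N EA" and EB: "cptp N EB" and r: "r > 0"
    and R: "\<And>\<phi>a \<phi>b. is_unit_vector N \<phi>a \<Longrightarrow> is_unit_vector N \<phi>b \<Longrightarrow> J_ratio N (K_phi N EA EB \<phi>a \<phi>b) s \<le> ereal r"
    and ne: "Hs N s \<noteq> {}"
    and u: "u \<in> carrier_vec N" and v: "v \<in> carrier_vec N"
    and \<rho>: "\<rho> \<in> Hs N s" and \<rho>': "\<rho>' \<in> Hs N s"
  shows "Re (mtrace (K_phi N EA EB u v * \<rho>)) \<le> r * Re (mtrace (K_phi N EA EB u v * \<rho>'))"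
proof -
  obtain \<psi> where rr: "\<rho> = ketbra \<psi>" and u1: "is_unit_vector (N*N) \<psi>" using Hs_elem[OF \<rho>] by blast
  obtain \<psi>' where rr': "\<rho>' = ketbra \<psi>'" and u2: "is_unit_vector (N*N) \<psi>'" using Hs_elem[OF \<rho>'] by blast
  obtain \<phi>a c where a: "is_unit_vector N \<phi>a" and c: "c \<ge> 0"
    and du: "\<forall>x<N. \<forall>y<N. ketbra u $$ (x,y) = complex_of_real c * ketbra \<phi>a $$ (x,y)"
    using normalize[OF N u] by blast
  obtain \<phi>b d where b: "is_unit_vector N \<phi>b" and d: "d \<ge> 0"
    and dv: "\<forall>x<N. \<forall>y<N. ketbra v $$ (x,y) = complex_of_real d * ketbra \<phi>b $$ (x,y)"
    using normalize[OF N v] by blast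
  let ?K = "K_phi N EA EB \<phi>a \<phi>b"
  have ineq: "Re (mtrace (?K * \<rho>)) \<le> r * Re (mtrace (?K * \<rho>'))"
    by (rule ratio_to_ineq[OF ne f_bound[OF K_phi_carrier] f_K_phi_nonneg[OF EA EB unit_carrier[OF a] unit_carrier[OF b]] r R[OF a b] \<rho> \<rho>'])
  have sc: "qf (N*N) (K_phi N EA EB u v) w = complex_of_real (c * d) * qf (N*N) ?K w" for w
    by (rule K_phi_scale[OF EA EB u v unit_carrier[OF a] unit_carrier[OF b] du dv])
  have "Re (mtrace (K_phi N EA EB u v * \<rho>)) = (c * d) * Re (mtrace (?K * \<rho>))"
    unfolding rr f_Hs[OF K_phi_carrier u1] sc by simp
  also have "\<dots> \<le> (c * d) * (r * Re (mtrace (?K * \<rho>')))"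
    using ineq c d by (intro mult_left_mono) auto
  also have "\<dots> = r * Re (mtrace (K_phi N EA EB u v * \<rho>'))"
    unfolding rr' f_Hs[OF K_phi_carrier u2] sc by simp
  finally show ?thesis .
qed

lemma unit_vec_unit:
  assumes N: "N \<ge> 1"
  shows "is_unit_vector N (unit_vec N 0)"
proof -
  have e: "(cmod (unit_vec N 0 $ i))^2 = (if i = 0 then 1 else 0)" if "i < N" for i
    using that by (simp add: unit_vec_def)
  have "(\<Sum>i<N. (cmod (unit_vec N 0 $ i))^2) = (\<Sum>i<N. if i = 0 then 1 else 0)"
    by (intro sum.cong refl) (simp add: e)
  also have "\<dots> = 1" using N by (simp add: sum.delta)
  finally show ?thesis unfolding is_unit_vector_def by simp
qed

lemma TW:
  assumes N: "N \<ge> 1" and EA: "cptp N EA" and EB: "cptp N EB" and r: "r > 0"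
    and R: "\<And>\<phi>a \<phi>b. is_unit_vector N \<phi>a \<Longrightarrow> is_unit_vector N \<phi>b \<Longrightarrow> J_ratio N (K_phi N EA EB \<phi>a \<phi>b) s \<le> ereal r"
    and ne: "Hs N s \<noteq> {}"
    and MA: "psd N MA" and MB: "psd N MB"
    and \<rho>: "\<rho> \<in> Hs N s" and \<rho>': "\<rho>' \<in> Hs N s"
  shows "Re (mtrace (kron MA MB * prod_channel N EA EB \<rho>)) \<le> r * Re (mtrace (kron MA MB * prod_channel N EA EB \<rho>'))"
proof -
  have MAc: "MA \<in> carrier_mat N N" using MA unfolding psd_iff by blast
  have MBc: "MB \<in> carrier_mat N N" using MB unfolding psd_iff by blast
  obtain m1 :: nat and us1 where us1: "\<forall>l<m1. us1 l \<in> carrier_vec N"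
    and d1: "\<forall>i<N. \<forall>j<N. MA $$ (i,j) = (\<Sum>l<m1. us1 l $ i * cnj (us1 l $ j))"
    using psd_decomp[OF MA] by blast
  obtain m2 :: nat and us2 where us2: "\<forall>l<m2. us2 l \<in> carrier_vec N"
    and d2: "\<forall>i<N. \<forall>j<N. MB $$ (i,j) = (\<Sum>l<m2. us2 l $ i * cnj (us2 l $ j))"
    using psd_decomp[OF MB] by blast
  show ?thesis
    unfolding expand_term[OF EA EB MAc MBc us1 d1 us2 d2 \<rho>] expand_term[OF EA EB MAc MBc us1 d1 us2 d2 \<rho>']
      sum_distrib_left
    by (intro sum_mono KL[OF N EA EB r R ne _ _ \<rho> \<rho>']) (use us1 us2 in auto)
qed

lemma dir1:
  assumes N: "N \<ge> 1" and s: "s \<le> ln (real N)" and EA: "cptp N EA" and EB: "cptp N EB"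
    and E: "eclm_qldp N EA EB s \<epsilon>"
  shows "ereal_ln (SUP \<phi>a \<in> {v. is_unit_vector N v}. SUP \<phi>b \<in> {v. is_unit_vector N v}.
                 J_ratio N (K_phi N EA EB \<phi>a \<phi>b) s) \<le> ereal \<epsilon>" (is "ereal_ln ?S \<le> _")
proof -
  have ne: "Hs N s \<noteq> {}" by (rule Hs_nonempty[OF N s])
  obtain \<rho>0 where \<rho>0: "\<rho>0 \<in> Hs N s" using ne by blast
  have E': "\<And>ma mb MA MB \<rho> \<rho>' T. povm N ma MA \<Longrightarrow> povm N mb MB \<Longrightarrow> \<rho> \<in> Hs N s \<Longrightarrow> \<rho>' \<in> Hs N s \<Longrightarrow>
      T \<subseteq> {..<ma} \<times> {..<mb} \<Longrightarrow> lm_prob N EA EB MA MB \<rho> T \<le> exp \<epsilon> * lm_prob N EA EB MA MB \<rho>' T"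
    using E unfolding eclm_qldp_def by blast
  have e1: "exp \<epsilon> \<ge> 1"
  proof -
    obtain \<psi> where r: "\<rho>0 = ketbra \<psi>" and u: "is_unit_vector (N*N) \<psi>" using Hs_elem[OF \<rho>0] by blast
    have "lm_prob N EA EB (\<lambda>_. 1\<^sub>m N) (\<lambda>_. 1\<^sub>m N) \<rho>0 {(0,0)} = Re (mtrace (kron (1\<^sub>m N) (1\<^sub>m N) * \<rho>0))"
      using lm_single[OF EA EB _ _ \<rho>0, of "\<lambda>_. 1\<^sub>m N" "\<lambda>_. 1\<^sub>m N"] by (simp add: hs_adj_one[OF EA] hs_adj_one[OF EB])
    also have "\<dots> = Re (qf (N*N) (kron (1\<^sub>m N) (1\<^sub>m N)) \<psi>)"
      unfolding r by (rule f_Hs[OF kron_carrier[OF one_carrier_mat one_carrier_mat] u])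
    also have "qf (N*N) (kron (1\<^sub>m N) (1\<^sub>m N)) \<psi> = 1 * qf (N*N) (1\<^sub>m (N*N)) \<psi>"
    proof (rule qf_scale)
      fix a b assume a: "a < N*N" and b: "b < N*N"
      have ab: "a div N = b div N \<and> a mod N = b mod N \<longleftrightarrow> a = b" by (metis div_mult_mod_eq)
      show "kron (1\<^sub>m N) (1\<^sub>m N) $$ (a,b) = 1 * 1\<^sub>m (N*N) $$ (a,b)"
        using a b divmod_bounds[OF a] divmod_bounds[OF b] ab by (auto simp: kron_entry[where N=N])
    qed
    also have "Re (1 * qf (N*N) (1\<^sub>m (N*N)) \<psi>) = (\<Sum>i<N*N. (cmod (\<psi> $ i))^2)"
      unfolding mult_1 qf_one Re_sum by (simp only: cnj_mult_self)
    also have "\<dots> = 1" using u unfolding is_unit_vector_def by blast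
    finally have "lm_prob N EA EB (\<lambda>_. 1\<^sub>m N) (\<lambda>_. 1\<^sub>m N) \<rho>0 {(0,0)} = 1" .
    moreover have "lm_prob N EA EB (\<lambda>_. 1\<^sub>m N) (\<lambda>_. 1\<^sub>m N) \<rho>0 {(0,0)} \<le> exp \<epsilon> * lm_prob N EA EB (\<lambda>_. 1\<^sub>m N) (\<lambda>_. 1\<^sub>m N) \<rho>0 {(0,0)}"
      by (rule E'[OF povm_trivial povm_trivial \<rho>0 \<rho>0]) auto
    ultimately show ?thesis by simp
  qed
  have R: "J_ratio N (K_phi N EA EB \<phi>a \<phi>b) s \<le> ereal (exp \<epsilon>)"
    if a: "is_unit_vector N \<phi>a" and b: "is_unit_vector N \<phi>b" for \<phi>a \<phi>b
  proof (rule ineq_to_ratio[OF ne e1])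
    fix \<rho> \<rho>' assume \<rho>: "\<rho> \<in> Hs N s" and \<rho>': "\<rho>' \<in> Hs N s"
    let ?MA = "\<lambda>i::nat. if i = 0 then ketbra \<phi>a else 1\<^sub>m N - ketbra \<phi>a"
    let ?MB = "\<lambda>i::nat. if i = 0 then ketbra \<phi>b else 1\<^sub>m N - ketbra \<phi>b"
    have "lm_prob N EA EB ?MA ?MB \<rho> {(0,0)} \<le> exp \<epsilon> * lm_prob N EA EB ?MA ?MB \<rho>' {(0,0)}"
      by (rule E'[OF povm_rank1[OF a] povm_rank1[OF b] \<rho> \<rho>']) auto
    moreover have "lm_prob N EA EB ?MA ?MB \<rho> {(0,0)} = Re (mtrace (K_phi N EA EB \<phi>a \<phi>b * \<rho>))"
      using lm_single[OF EA EB _ _ \<rho>, of ?MA ?MB] unit_carrier[OF a] unit_carrier[OF b] by (simp add: K_phi_def)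
    moreover have "lm_prob N EA EB ?MA ?MB \<rho>' {(0,0)} = Re (mtrace (K_phi N EA EB \<phi>a \<phi>b * \<rho>'))"
      using lm_single[OF EA EB _ _ \<rho>', of ?MA ?MB] unit_carrier[OF a] unit_carrier[OF b] by (simp add: K_phi_def)
    ultimately show "Re (mtrace (K_phi N EA EB \<phi>a \<phi>b * \<rho>)) \<le> exp \<epsilon> * Re (mtrace (K_phi N EA EB \<phi>a \<phi>b * \<rho>'))"
      by simp
  qed
  have S: "?S \<le> ereal (exp \<epsilon>)" by (intro SUP_least) (auto intro: R)
  show ?thesis
  proof (cases ?S rule: ereal_cases)
    case (real t)
    show ?thesis
    proof (cases "t > 0")
      case True
      have "t \<le> exp \<epsilon>" using S real by simp
      then have "ln t \<le> \<epsilon>" using ln_le_cancel_iff[of t "exp \<epsilon>"] True by simp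
      then show ?thesis unfolding ereal_ln_def using real True by simp
    next
      case False
      then show ?thesis unfolding ereal_ln_def using real by simp
    qed
  next
    case PInf
    then show ?thesis using S by simp
  next
    case MInf
    then show ?thesis unfolding ereal_ln_def by simp
  qed
qed

lemma dir2:
  assumes N: "N \<ge> 1" and s: "s \<le> ln (real N)" and EA: "cptp N EA" and EB: "cptp N EB"
  shows "eps_star N EA EB s \<le> ereal_ln (SUP \<phi>a \<in> {v. is_unit_vector N v}. SUP \<phi>b \<in> {v. is_unit_vector N v}.
                 J_ratio N (K_phi N EA EB \<phi>a \<phi>b) s)" (is "_ \<le> ereal_ln ?S")
proof (cases "?S = \<infinity>")
  case True
  then show ?thesis unfolding ereal_ln_def by simp
next
  case False
  have ne: "Hs N s \<noteq> {}" by (rule Hs_nonempty[OF N s])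
  have ge1: "J_ratio N (K_phi N EA EB \<phi>a \<phi>b) s \<ge> 1" if "is_unit_vector N \<phi>a" "is_unit_vector N \<phi>b" for \<phi>a \<phi>b
    by (rule ratio_ge1[OF ne f_bound[OF K_phi_carrier] f_K_phi_nonneg[OF EA EB unit_carrier[OF that(1)] unit_carrier[OF that(2)]]])
  have le: "J_ratio N (K_phi N EA EB \<phi>a \<phi>b) s \<le> ?S" if a: "is_unit_vector N \<phi>a" and b: "is_unit_vector N \<phi>b" for \<phi>a \<phi>b
  proof -
    have "J_ratio N (K_phi N EA EB \<phi>a \<phi>b) s \<le> (SUP \<phi>b \<in> {v. is_unit_vector N v}. J_ratio N (K_phi N EA EB \<phi>a \<phi>b) s)"
      using b by (intro SUP_upper) auto
    also have "\<dots> \<le> ?S" using a by (intro SUP_upper) auto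
    finally show ?thesis .
  qed
  have u0: "is_unit_vector N (unit_vec N 0)" by (rule unit_vec_unit[OF N])
  have S1: "1 \<le> ?S" using ge1[OF u0 u0] le[OF u0 u0] by (rule order_trans)
  obtain r where Sr: "?S = ereal r" using False S1 by (cases ?S) auto
  have r1: "r \<ge> 1" using S1 Sr by simp
  then have rp: "r > 0" by simp
  have R: "J_ratio N (K_phi N EA EB \<phi>a \<phi>b) s \<le> ereal r" if "is_unit_vector N \<phi>a" "is_unit_vector N \<phi>b" for \<phi>a \<phi>b
    using le[OF that] Sr by simp
  have adm: "eclm_qldp N EA EB s (ln r)"
    unfolding eclm_qldp_def
  proof (intro allI impI ballI)
    fix ma mb MA MB \<rho> \<rho>' and T :: "(nat \<times> nat) set"
    assume pa: "povm N ma MA" and pb: "povm N mb MB" and \<rho>: "\<rho> \<in> Hs N s" and \<rho>': "\<rho>' \<in> Hs N s"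
      and T: "T \<subseteq> {..<ma} \<times> {..<mb}"
    have "lm_prob N EA EB MA MB \<rho> T \<le> r * lm_prob N EA EB MA MB \<rho>' T"
      unfolding lm_prob_def sum_distrib_left
    proof (intro sum_mono)
      fix x assume x: "x \<in> T"
      obtain a b where xab: "x = (a,b)" by (cases x)
      have a: "a < ma" and b: "b < mb" using x T xab by auto
      have "psd N (MA a)" using pa a unfolding povm_def by blast
      moreover have "psd N (MB b)" using pb b unfolding povm_def by blast
      ultimately have "Re (mtrace (kron (MA a) (MB b) * prod_channel N EA EB \<rho>)) \<le> r * Re (mtrace (kron (MA a) (MB b) * prod_channel N EA EB \<rho>'))"
        using TW[OF N EA EB rp, of s] R ne \<rho> \<rho>' by blast
      then show "(case x of (a, b) \<Rightarrow> Re (mtrace (kron (MA a) (MB b) * prod_channel N EA EB \<rho>))) \<le>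
          r * (case x of (a, b) \<Rightarrow> Re (mtrace (kron (MA a) (MB b) * prod_channel N EA EB \<rho>')))"
        unfolding xab by simp
    qed
    then show "lm_prob N EA EB MA MB \<rho> T \<le> exp (ln r) * lm_prob N EA EB MA MB \<rho>' T"
      using rp by simp
  qed
  then have "eps_star N EA EB s \<le> ereal (ln r)" unfolding eps_star_def by (intro Inf_lower) blast
  then show ?thesis unfolding Sr ereal_ln_def using rp by simp
qed

theorem theorem2:
  fixes N :: nat and s :: real and EA EB :: "complex mat \<Rightarrow> complex mat"
  assumes "N \<ge> 1"
    and "0 \<le> s" and "s \<le> ln (real N)"
    and "cptp N EA" and "cptp N EB"
  shows "eps_star N EA EB s =
    ereal_ln (SUP \<phi>a \<in> {v. is_unit_vector N v}. SUP \<phi>b \<in> {v. is_unit_vector N v}.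
                 J_ratio N (K_phi N EA EB \<phi>a \<phi>b) s)"
proof (rule antisym)
  show "eps_star N EA EB s \<le> ereal_ln (SUP \<phi>a \<in> {v. is_unit_vector N v}. SUP \<phi>b \<in> {v. is_unit_vector N v}.
                 J_ratio N (K_phi N EA EB \<phi>a \<phi>b) s)"
    by (rule dir2[OF assms(1,3,4,5)])
  show "ereal_ln (SUP \<phi>a \<in> {v. is_unit_vector N v}. SUP \<phi>b \<in> {v. is_unit_vector N v}.
                 J_ratio N (K_phi N EA EB \<phi>a \<phi>b) s) \<le> eps_star N EA EB s"
    unfolding eps_star_def
  proof (rule Inf_greatest)
    fix x assume "x \<in> {ereal \<epsilon> |\<epsilon>. eclm_qldp N EA EB s \<epsilon>}"
    then obtain \<epsilon> where x: "x = ereal \<epsilon>" and E: "eclm_qldp N EA EB s \<epsilon>" by blast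
    show "ereal_ln (SUP \<phi>a \<in> {v. is_unit_vector N v}. SUP \<phi>b \<in> {v. is_unit_vector N v}.
                 J_ratio N (K_phi N EA EB \<phi>a \<phi>b) s) \<le> x"
      unfolding x by (rule dir1[OF assms(1,3,4,5) E])
  qed
qed

end
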